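(* There is an absolute constant $c$ such that, for every instance, every arrival order, every admissible choice of the forests $\hat F^{(t)}_{{\rm inh},i}\subseteq\hat F^{(t)}_i$, and every level $i\ge0$, \[ \sum_{t=1}^{n}\bigl|\hat F^{(t)}_{i}\setminus\hat F^{(t)}_{{\rm inh},i}\bigr|\cdot 2^{i+1}\le c\cdot\mathsf{OPT}, \] where $\mathsf{OPT}$ is the cost of an optimal Steiner forest solution to the final instance $(\mathcal{M}^{(n)},D^{(n)})$.
   Context: An offline instance $(\mathcal{M},D)$ consists of demand pairs $D=\{(u_j,v_j)\}$ over a terminal set $V=\{u_j,v_j\}$, each terminal in exactly one pair (the other element of its pair is its mate), and a metric $\mathcal{M}$ on $V$ with all distances at least $1$, viewed as the complete graph on $V$ with edge costs equal to distances; a feasible solution is an edge set in which every pair is connected, and its cost is the sum of its edge costs. A clustering of $V$ is a partition of $V$; $\mathcal{M}/\mathscr{C}$ denotes the shortest-path metric on $\mathscr{C}$ of the graph obtained from the complete weighted graph on $V$ by contracting each cluster of $\mathscr{C}$ into a single vertex. For clusterings $\mathscr{C}_1$ of $V_1$ and $\mathscr{C}_2$ of $V_2$, write $\mathscr{C}_1\preceq\mathscr{C}_2$ if every cluster of $\mathscr{C}_1$ is contained in some cluster of $\mathscr{C}_2$. Clustering procedure: ${\sf level}(v)=\lceil\log_2{\sf dist}_{\mathcal{M}}(v,\text{mate of }v)\rceil$, ${\sf level}(C)=\max_{v\in C}{\sf level}(v)$, $L=\max_v{\sf level}(v)$. $\mathscr{C}_0$ is the singleton clustering. For $i=0,\dots,L$: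 $C\in\mathscr{C}_i$ is $i$-active if ${\sf level}(C)\ge i$; $H_i$ has as vertices the $i$-active clusters of $\mathscr{C}_i$, with an edge between distinct $C_1,C_2$ iff ${\sf dist}_{\mathcal{M}/\mathscr{C}_i}(C_1,C_2)<2^{i+1}$; $\mathscr{C}_{i+1}$ consists of the non-$i$-active clusters of $\mathscr{C}_i$ together with, for each connected component of $H_i$, the union of its clusters. Online setting: $n$ pairs arrive in order; for $1\le t\le n$ the instance $(\mathcal{M}^{(t)},D^{(t)})$ consists of the first $t$ pairs and the metric restricted to their terminals. Running the procedure yields $L^{(t)},\mathscr{C}^{(t)}_i,H^{(t)}_i$; for $i\ge L^{(t)}+1$, $\mathscr{C}^{(t)}_i:=\mathscr{C}^{(t)}_{L^{(t)}+1}$ and $H^{(t)}_i$ is empty; for $t=0$ all $\mathscr{C}^{(0)}_i,H^{(0)}_i$ are empty. It holds that $\mathscr{C}^{(t-1)}_i\preceq\mathscr{C}^{(t)}_i$. Virtual forests are chosen recursively in $t$: $\hat F^{(0)}_i=\emptyset$. Given the spanning forest $\hat F^{(t-1)}_i$ of $H^{(t-1)}_i$, for each edge $(C_1,C_2)\in\hat F^{(t-1)}_i$ let $D_1,D_2$ be the clusters of $\mathscr{C}^{(t)}_i$ containing $C_1,C_2$; if $D_1\ne D_2$ then $(D_1,D_2)$ is an edge of $H^{(t)}_i$, called inherited. Let $\hat F^{(t)}_{{\rm inh},i}$ be an arbitrary spanning forest of the subgraph of $H^{(t)}_i$ formed by its inherited edges, and let $\hat F^{(t)}_i$ be an arbitrary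 spanning forest of $H^{(t)}_i$ containing $\hat F^{(t)}_{{\rm inh},i}$ (these arbitrary choices are the "admissible choices"). *)

theory Defs
  imports Complex_Main
begin

(* Terminals are natural numbers; an online instance is a list ps of demand pairs
   (arrival order = list order); prefix of length t = take t ps.
   d is the metric (only its values on the terminals matter). *)

definition terms :: "(nat \<times> nat) list \<Rightarrow> nat set" where
  "terms P = fst ` set P \<union> snd ` set P"

definition mate :: "(nat \<times> nat) list \<Rightarrow> nat \<Rightarrow> nat" where
  "mate P v = (THE w. (v, w) \<in> set P \<or> (w, v) \<in> set P)"

definition lvl :: "(nat \<Rightarrow> nat \<Rightarrow> real) \<Rightarrow> (nat \<times> nat) list \<Rightarrow> nat \<Rightarrow> int" where
  "lvl d P v = \<lceil>log 2 (d v (mate P v))\<rceil>"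

definition clvl :: "(nat \<Rightarrow> nat \<Rightarrow> real) \<Rightarrow> (nat \<times> nat) list \<Rightarrow> nat set \<Rightarrow> int" where
  "clvl d P C = Max (lvl d P ` C)"

definition active :: "(nat \<Rightarrow> nat \<Rightarrow> real) \<Rightarrow> (nat \<times> nat) list \<Rightarrow> nat \<Rightarrow> nat set \<Rightarrow> bool" where
  "active d P i C \<longleftrightarrow> clvl d P C \<ge> int i"

(* contracted metric M/Cs: shortest walk in the complete graph on V where steps
   inside a cluster cost 0 *)
definition step_cost :: "(nat \<Rightarrow> nat \<Rightarrow> real) \<Rightarrow> nat set set \<Rightarrow> nat \<Rightarrow> nat \<Rightarrow> real" where
  "step_cost d Cs x y = (if \<exists>C\<in>Cs. x \<in> C \<and> y \<in> C then 0 else d x y)"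

definition walk_cost :: "(nat \<Rightarrow> nat \<Rightarrow> real) \<Rightarrow> nat set set \<Rightarrow> nat list \<Rightarrow> real" where
  "walk_cost d Cs xs = sum_list (map (\<lambda>(x, y). step_cost d Cs x y) (zip xs (tl xs)))"

definition cdist :: "(nat \<Rightarrow> nat \<Rightarrow> real) \<Rightarrow> nat set \<Rightarrow> nat set set \<Rightarrow> nat set \<Rightarrow> nat set \<Rightarrow> real" where
  "cdist d V Cs C1 C2 = Inf {walk_cost d Cs xs | xs. xs \<noteq> [] \<and> set xs \<subseteq> V \<and> hd xs \<in> C1 \<and> last xs \<in> C2}"

(* edges of H_i, given the clustering Cs = C_i; an edge is the 2-set {C1, C2} *)
definition Hedges :: "(nat \<Rightarrow> nat \<Rightarrow> real) \<Rightarrow> (nat \<times> nat) list \<Rightarrow> nat set set \<Rightarrow> nat \<Rightarrow> nat set set set" where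
  "Hedges d P Cs i = {{C1, C2} | C1 C2. C1 \<in> Cs \<and> C2 \<in> Cs \<and> active d P i C1 \<and> active d P i C2 \<and>
      C1 \<noteq> C2 \<and> cdist d (terms P) Cs C1 C2 < 2 ^ (i + 1)}"

definition hrel :: "(nat \<Rightarrow> nat \<Rightarrow> real) \<Rightarrow> (nat \<times> nat) list \<Rightarrow> nat set set \<Rightarrow> nat \<Rightarrow> (nat set \<times> nat set) set" where
  "hrel d P Cs i = {(C1, C2). {C1, C2} \<in> Hedges d P Cs i}"

primrec clus :: "(nat \<Rightarrow> nat \<Rightarrow> real) \<Rightarrow> (nat \<times> nat) list \<Rightarrow> nat \<Rightarrow> nat set set" where
  "clus d P 0 = (\<lambda>v. {v}) ` terms P"
| "clus d P (Suc i) = (let Cs = clus d P i in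
     {C \<in> Cs. \<not> active d P i C} \<union>
     {\<Union> {C'. (C, C') \<in> (hrel d P Cs i)\<^sup>*} | C. C \<in> Cs \<and> active d P i C})"

definition H :: "(nat \<Rightarrow> nat \<Rightarrow> real) \<Rightarrow> (nat \<times> nat) list \<Rightarrow> nat \<Rightarrow> nat \<Rightarrow> nat set set set" where
  "H d ps t i = Hedges d (take t ps) (clus d (take t ps) i) i"

definition conn :: "'a set set \<Rightarrow> ('a \<times> 'a) set" where
  "conn F = {(a, b). {a, b} \<in> F}\<^sup>*"

definition is_forest :: "'a set set \<Rightarrow> bool" where
  "is_forest F \<longleftrightarrow> (\<forall>e\<in>F. \<forall>a b. e = {a, b} \<longrightarrow> a \<noteq> b \<and> (a, b) \<notin> conn (F - {e}))"

definition spanning_forest :: "'a set set \<Rightarrow> 'a set set \<Rightarrow> bool" where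
  "spanning_forest E F \<longleftrightarrow> F \<subseteq> E \<and> is_forest F \<and> (\<forall>a b. (a, b) \<in> conn E \<longrightarrow> (a, b) \<in> conn F)"

definition inherited :: "(nat \<Rightarrow> nat \<Rightarrow> real) \<Rightarrow> (nat \<times> nat) list \<Rightarrow> nat \<Rightarrow> nat \<Rightarrow> nat set set set \<Rightarrow> nat set set set" where
  "inherited d ps t i Fprev = {{D1, D2} | C1 C2 D1 D2. {C1, C2} \<in> Fprev \<and>
      D1 \<in> clus d (take t ps) i \<and> D2 \<in> clus d (take t ps) i \<and> C1 \<subseteq> D1 \<and> C2 \<subseteq> D2 \<and> D1 \<noteq> D2}"

definition admissible :: "(nat \<Rightarrow> nat \<Rightarrow> real) \<Rightarrow> (nat \<times> nat) list \<Rightarrow>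
    (nat \<Rightarrow> nat \<Rightarrow> nat set set set) \<Rightarrow> (nat \<Rightarrow> nat \<Rightarrow> nat set set set) \<Rightarrow> bool" where
  "admissible d ps Finh F \<longleftrightarrow> (\<forall>i. F 0 i = {}) \<and>
     (\<forall>t\<in>{1..length ps}. \<forall>i.
        spanning_forest (inherited d ps t i (F (t - 1) i) \<inter> H d ps t i) (Finh t i) \<and>
        Finh t i \<subseteq> F t i \<and> spanning_forest (H d ps t i) (F t i))"

definition valid_instance :: "(nat \<Rightarrow> nat \<Rightarrow> real) \<Rightarrow> (nat \<times> nat) list \<Rightarrow> bool" where
  "valid_instance d ps \<longleftrightarrow> distinct (concat (map (\<lambda>(u, v). [u, v]) ps)) \<and>
     (\<forall>x\<in>terms ps. d x x = 0) \<and>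
     (\<forall>x\<in>terms ps. \<forall>y\<in>terms ps. d x y = d y x) \<and>
     (\<forall>x\<in>terms ps. \<forall>y\<in>terms ps. x \<noteq> y \<longrightarrow> 1 \<le> d x y) \<and>
     (\<forall>x\<in>terms ps. \<forall>y\<in>terms ps. \<forall>z\<in>terms ps. d x z \<le> d x y + d y z)"

definition sf_feasible :: "(nat \<times> nat) list \<Rightarrow> (nat \<times> nat) set \<Rightarrow> bool" where
  "sf_feasible P E \<longleftrightarrow> E \<subseteq> terms P \<times> terms P \<and> (\<forall>(u, v)\<in>set P. (u, v) \<in> (E \<union> E\<inverse>)\<^sup>*)"

definition sf_cost :: "(nat \<Rightarrow> nat \<Rightarrow> real) \<Rightarrow> (nat \<times> nat) set \<Rightarrow> real" where
  "sf_cost d E = (\<Sum>(x, y)\<in>E. d x y)"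

definition OPT :: "(nat \<Rightarrow> nat \<Rightarrow> real) \<Rightarrow> (nat \<times> nat) list \<Rightarrow> real" where
  "OPT d P = Inf (sf_cost d ` {E. sf_feasible P E})"

end

theory Submission
  imports Defs "HOL-Library.Transitive_Closure_Table"
begin

lemma path_sum_bound:
  fixes g :: "'a \<Rightarrow> real"
  assumes "rtrancl_path (\<lambda>a b. (a,b) \<in> E \<union> E\<inverse>) x xs y" "distinct (x # xs)" "finite E"
  shows "\<bar>g x - g y\<bar> \<le> (\<Sum>e\<in>{e\<in>E. fst e \<in> set (x#xs) \<and> snd e \<in> set (x#xs)}. \<bar>g (fst e) - g (snd e)\<bar>)"
  using assms(1,2)
proof (induction rule: rtrancl_path.induct)
  case (base x) then show ?case by (simp add: sum_nonneg)
next
  case (step x z zs y)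
  let ?W = "\<lambda>A. {e\<in>E. fst e \<in> A \<and> snd e \<in> A}"
  from step.prems have dz: "distinct (z#zs)" and xn: "x \<notin> set (z#zs)" by auto
  note IH = step.IH[OF dz]
  obtain e where e: "e \<in> E" "e = (x,z) \<or> e = (z,x)" using step.hyps(1) by auto
  have eW: "e \<notin> ?W (set (z#zs))" using e xn by auto
  have sub: "insert e (?W (set (z#zs))) \<subseteq> ?W (set (x#z#zs))" using e by auto
  have fin: "finite (?W (set (x#z#zs)))" using \<open>finite E\<close> by auto
  have fin2: "finite (?W (set (z#zs)))" using \<open>finite E\<close> by auto
  have ge: "\<bar>g x - g z\<bar> = \<bar>g (fst e) - g (snd e)\<bar>" using e by auto
  have "\<bar>g x - g y\<bar> \<le> \<bar>g x - g z\<bar> + \<bar>g z - g y\<bar>" by linarith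
  also have "\<dots> \<le> \<bar>g (fst e) - g (snd e)\<bar> + (\<Sum>e\<in>?W (set (z#zs)). \<bar>g (fst e) - g (snd e)\<bar>)"
    using IH ge by linarith
  also have "\<dots> = (\<Sum>e\<in>insert e (?W (set (z#zs))). \<bar>g (fst e) - g (snd e)\<bar>)"
    using eW fin2 by simp
  also have "\<dots> \<le> (\<Sum>e\<in>?W (set (x#z#zs)). \<bar>g (fst e) - g (snd e)\<bar>)"
    by (rule sum_mono2[OF fin sub]) simp
  finally show ?case .
qed

lemma path_bound:
  fixes g :: "'a \<Rightarrow> real"
  assumes "(x,y) \<in> (E \<union> E\<inverse>)\<^sup>*" "finite E"
  shows "\<bar>g x - g y\<bar> \<le> (\<Sum>e\<in>E. \<bar>g (fst e) - g (snd e)\<bar>)"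
proof -
  have "(\<lambda>a b. (a,b) \<in> E \<union> E\<inverse>)\<^sup>*\<^sup>* x y" unfolding rtranclp_rtrancl_eq
    using assms(1) by (metis (no_types, lifting) case_prodI2 mem_Collect_eq pred_equals_eq2 subrelI subset_antisym case_prodD)
  then obtain xs where "rtrancl_path (\<lambda>a b. (a,b) \<in> E \<union> E\<inverse>) x xs y"
    by (auto simp: rtranclp_eq_rtrancl_path)
  then obtain xs' where p: "rtrancl_path (\<lambda>a b. (a,b) \<in> E \<union> E\<inverse>) x xs' y" "distinct (x#xs')"
    by (rule rtrancl_path_distinct)
  have "\<bar>g x - g y\<bar> \<le> (\<Sum>e\<in>{e\<in>E. fst e \<in> set (x#xs') \<and> snd e \<in> set (x#xs')}. \<bar>g (fst e) - g (snd e)\<bar>)"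
    by (rule path_sum_bound[OF p assms(2)])
  also have "\<dots> \<le> (\<Sum>e\<in>E. \<bar>g (fst e) - g (snd e)\<bar>)"
    by (rule sum_mono2) (use assms(2) in auto)
  finally show ?thesis .
qed

lemma finite_terms: "finite (terms P)"
  by (simp add: terms_def)

lemma moat:
  fixes d :: "nat \<Rightarrow> nat \<Rightarrow> real" and \<rho> :: real
  assumes vi: "valid_instance d ps"
    and S: "S \<subseteq> terms ps" and rho: "\<rho> > 0"
    and far: "\<And>x. x \<in> S \<Longrightarrow> \<exists>y. ((x,y) \<in> set ps \<or> (y,x) \<in> set ps) \<and> \<rho> \<le> d x y"
    and sep: "\<And>x y. x \<in> S \<Longrightarrow> y \<in> S \<Longrightarrow> x \<noteq> y \<Longrightarrow> 2*\<rho> \<le> d x y"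
    and feas: "sf_feasible ps E"
  shows "real (card S) * \<rho> \<le> 2 * sf_cost d E"
proof -
  have d0: "\<And>x. x \<in> terms ps \<Longrightarrow> d x x = 0" 
    and dsym: "\<And>x y. x \<in> terms ps \<Longrightarrow> y \<in> terms ps \<Longrightarrow> d x y = d y x"
    and d1: "\<And>x y. x \<in> terms ps \<Longrightarrow> y \<in> terms ps \<Longrightarrow> x \<noteq> y \<Longrightarrow> 1 \<le> d x y"
    and tri: "\<And>x y z. x \<in> terms ps \<Longrightarrow> y \<in> terms ps \<Longrightarrow> z \<in> terms ps \<Longrightarrow> d x z \<le> d x y + d y z"
    using vi unfolding valid_instance_def by auto
  have dnn: "\<And>x y. x \<in> terms ps \<Longrightarrow> y \<in> terms ps \<Longrightarrow> 0 \<le> d x y"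
    by (metis d0 d1 order.trans zero_le_one order.refl)
  have Eterms: "E \<subseteq> terms ps \<times> terms ps" and conn: "\<And>u v. (u,v) \<in> set ps \<Longrightarrow> (u,v) \<in> (E \<union> E\<inverse>)\<^sup>*"
    using feas unfolding sf_feasible_def by auto
  have finE: "finite E" using Eterms finite_subset finite_terms by blast
  have finS: "finite S" using S finite_subset finite_terms by blast
  define f where "f x a = min (d x a) \<rho>" for x a
  define h where "h x e = \<bar>f x (fst e) - f x (snd e)\<bar>" for x e
  have A: "(\<Sum>x\<in>S. h x e) \<le> 2 * d (fst e) (snd e)" if eE: "e \<in> E" for e
  proof -
    obtain a b where e: "e = (a,b)" by force
    have a: "a \<in> terms ps" and b: "b \<in> terms ps" using eE e Eterms by auto
    have hb: "h x e \<le> d a b" if "x \<in> S" for x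
    proof -
      have x: "x \<in> terms ps" using that S by auto
      have "d x a \<le> d x b + d b a" "d x b \<le> d x a + d a b" using tri x a b by auto
      moreover have "d b a = d a b" using dsym a b by auto
      ultimately show ?thesis unfolding h_def f_def e by (simp add: min_def abs_le_iff)
    qed
    have one: "card {x\<in>S. d x c < \<rho>} \<le> 1" if c: "c \<in> terms ps" for c
    proof -
      have "\<forall>x\<in>{x\<in>S. d x c < \<rho>}. \<forall>y\<in>{x\<in>S. d x c < \<rho>}. x = y"
      proof (intro ballI, rule ccontr)
        fix x y assume xy: "x \<in> {x\<in>S. d x c < \<rho>}" "y \<in> {x\<in>S. d x c < \<rho>}" "x \<noteq> y"
        have "2*\<rho> \<le> d x y" using sep xy by auto
        moreover have "d x y \<le> d x c + d c y" using tri xy S c by auto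
        moreover have "d c y = d y c" using dsym xy S c by auto
        ultimately show False using xy by auto
      qed
      then show ?thesis using card_le_Suc0_iff_eq[of "{x\<in>S. d x c < \<rho>}"] finS by auto
    qed
    have "(\<Sum>x\<in>S. h x e) \<le> (\<Sum>x\<in>S. (if d x a < \<rho> then d a b else 0) + (if d x b < \<rho> then d a b else 0))"
    proof (rule sum_mono)
      fix x assume x: "x \<in> S"
      show "h x e \<le> (if d x a < \<rho> then d a b else 0) + (if d x b < \<rho> then d a b else 0)"
      proof (cases "d x a < \<rho> \<or> d x b < \<rho>")
        case True
        then show ?thesis using hb[OF x] dnn[OF a b] by auto
      next
        case False
        then have "h x e = 0" unfolding h_def f_def e by auto
        then show ?thesis using dnn[OF a b] by auto
      qed
    qed
    also have "\<dots> = real (card {x\<in>S. d x a < \<rho>}) * d a b + real (card {x\<in>S. d x b < \<rho>}) * d a b"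
      by (simp add: sum.distrib sum.inter_filter[OF finS, symmetric])
    also have "\<dots> \<le> 1 * d a b + 1 * d a b"
      using one[OF a] one[OF b] dnn[OF a b] by (intro add_mono mult_right_mono) auto
    finally show ?thesis using e by simp
  qed
  have B: "\<rho> \<le> (\<Sum>e\<in>E. h x e)" if xS: "x \<in> S" for x
  proof -
    obtain y where y: "(x,y) \<in> set ps \<or> (y,x) \<in> set ps" "\<rho> \<le> d x y" using far xS by blast
    have "(x,y) \<in> (E \<union> E\<inverse>)\<^sup>*"
    proof (cases "(x,y) \<in> set ps")
      case True then show ?thesis using conn by auto
    next
      case False
      then have "(y,x) \<in> (E \<union> E\<inverse>)\<^sup>*" using y conn by auto
      then have "(x,y) \<in> ((E \<union> E\<inverse>)\<inverse>)\<^sup>*" by (rule rtrancl_converseI)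
      moreover have "(E \<union> E\<inverse>)\<inverse> = E \<union> E\<inverse>" by auto
      ultimately show ?thesis by simp
    qed
    then have "\<bar>f x x - f x y\<bar> \<le> (\<Sum>e\<in>E. h x e)" unfolding h_def by (rule path_bound[OF _ finE])
    moreover have "f x x = 0" using d0 xS S rho unfolding f_def by auto
    moreover have "f x y = \<rho>" using y unfolding f_def by auto
    ultimately show ?thesis using rho by simp
  qed
  have "real (card S) * \<rho> = (\<Sum>x\<in>S. \<rho>)" by simp
  also have "\<dots> \<le> (\<Sum>x\<in>S. \<Sum>e\<in>E. h x e)" by (rule sum_mono) (rule B)
  also have "\<dots> = (\<Sum>e\<in>E. \<Sum>x\<in>S. h x e)" by (rule sum.swap)
  also have "\<dots> \<le> (\<Sum>e\<in>E. 2 * d (fst e) (snd e))" by (rule sum_mono) (rule A)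
  also have "\<dots> = 2 * sf_cost d E" unfolding sf_cost_def by (simp add: sum_distrib_left split_def)
  finally show ?thesis .
qed

lemma OPT_lower:
  fixes d :: "nat \<Rightarrow> nat \<Rightarrow> real" and \<rho> :: real
  assumes vi: "valid_instance d ps"
    and S: "S \<subseteq> terms ps" and rho: "\<rho> > 0"
    and far: "\<And>x. x \<in> S \<Longrightarrow> \<exists>y. ((x,y) \<in> set ps \<or> (y,x) \<in> set ps) \<and> \<rho> \<le> d x y"
    and sep: "\<And>x y. x \<in> S \<Longrightarrow> y \<in> S \<Longrightarrow> x \<noteq> y \<Longrightarrow> 2*\<rho> \<le> d x y"
  shows "real (card S) * \<rho> \<le> 2 * OPT d ps"
proof -
  have "sf_feasible ps (set ps)" unfolding sf_feasible_def terms_def by force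
  then have ne: "sf_cost d ` {E. sf_feasible ps E} \<noteq> {}" by auto
  have "real (card S) * \<rho> / 2 \<le> OPT d ps" unfolding OPT_def
    by (rule cInf_greatest[OF ne]) (use moat[OF vi S rho far sep] in force)
  then show ?thesis by simp
qed

definition pdist :: "(nat \<times> nat) list \<Rightarrow> bool" where
  "pdist P \<longleftrightarrow> distinct (concat (map (\<lambda>(u, v). [u, v]) P))"

lemma set_flat: "set (concat (map (\<lambda>(u, v). [u, v]) P)) = terms P"
  by (induction P) (auto simp: terms_def)

lemma pdist_pair: "pdist P \<Longrightarrow> (a,b) \<in> set P \<Longrightarrow> a \<noteq> b"
  by (induction P) (auto simp: pdist_def)

lemma pdist_unique: "pdist P \<Longrightarrow> (a,b) \<in> set P \<Longrightarrow> (c,e) \<in> set P \<Longrightarrow> a = c \<or> a = e \<or> b = c \<or> b = e \<Longrightarrow> (a,b) = (c,e)"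
proof (induction P)
  case Nil then show ?case by simp
next
  case (Cons p P)
  obtain u v where p: "p = (u,v)" by force
  have "pdist P" using Cons.prems(1) by (auto simp: pdist_def)
  have nin: "u \<notin> terms P" "v \<notin> terms P" using Cons.prems(1) p
  proof -
    have "distinct ([u,v] @ concat (map (\<lambda>(u, v). [u, v]) P))" using Cons.prems(1) p by (simp add: pdist_def)
    then have "u \<notin> set (concat (map (\<lambda>(u, v). [u, v]) P))" "v \<notin> set (concat (map (\<lambda>(u, v). [u, v]) P))"
      by (simp_all only: distinct_append) auto
    then show "u \<notin> terms P" "v \<notin> terms P" by (metis set_flat)+
  qed
  show ?case
  proof (cases "(a,b) = p")
    case True
    show ?thesis
    proof (cases "(c,e) = p")
      case True then show ?thesis using \<open>(a,b) = p\<close> by simp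
    next
      case False
      then have "(c,e) \<in> set P" using Cons.prems by auto
      then have "c \<in> terms P" "e \<in> terms P" unfolding terms_def by force+
      then show ?thesis using Cons.prems(4) True p nin by auto
    qed
  next
    case False
    then have ab: "(a,b) \<in> set P" using Cons.prems by auto
    then have abt: "a \<in> terms P" "b \<in> terms P" unfolding terms_def by force+
    show ?thesis
    proof (cases "(c,e) = p")
      case True then show ?thesis using Cons.prems(4) abt p nin by auto
    next
      case False
      then have "(c,e) \<in> set P" using Cons.prems by auto
      then show ?thesis using Cons.IH[OF \<open>pdist P\<close> ab] Cons.prems(4) by auto
    qed
  qed
qed

lemma mate_eq:
  assumes "pdist P" "(x,y) \<in> set P \<or> (y,x) \<in> set P"
  shows "mate P x = y"
  unfolding mate_def
proof (rule the_equality)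
  show "(x, y) \<in> set P \<or> (y, x) \<in> set P" by fact
next
  fix w assume w: "(x, w) \<in> set P \<or> (w, x) \<in> set P"
  show "w = y" using assms w pdist_unique[OF assms(1)] pdist_pair[OF assms(1)]
    by (metis prod.inject)
qed

lemma pdist_take: "pdist ps \<Longrightarrow> pdist (take t ps)"
proof -
  assume "pdist ps"
  then have "distinct (concat (map (\<lambda>(u, v). [u, v]) (take t ps @ drop t ps)))"
    by (simp add: pdist_def)
  then show ?thesis unfolding pdist_def by (simp only: map_append concat_append distinct_append)
qed

lemma terms_take_mono: "t \<le> t' \<Longrightarrow> terms (take t ps) \<subseteq> terms (take t' ps)"
  unfolding terms_def by (intro Un_mono image_mono set_take_subset_set_take)

lemma terms_take_sub: "terms (take t ps) \<subseteq> terms ps"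
  unfolding terms_def by (intro Un_mono image_mono set_take_subset)

lemma partner: "x \<in> terms P \<Longrightarrow> \<exists>y. (x,y) \<in> set P \<or> (y,x) \<in> set P"
proof -
  assume "x \<in> terms P"
  then obtain p where p: "p \<in> set P" "x = fst p \<or> x = snd p" unfolding terms_def by blast
  then show ?thesis by (metis prod.collapse)
qed

lemma lvl_take:
  assumes "pdist ps" "x \<in> terms (take t ps)"
  shows "lvl d (take t ps) x = lvl d ps x"
proof -
  obtain y where y: "(x,y) \<in> set (take t ps) \<or> (y,x) \<in> set (take t ps)" using partner assms(2) by blast
  have "mate (take t ps) x = y" by (rule mate_eq[OF pdist_take[OF assms(1)] y])
  moreover have "(x,y) \<in> set ps \<or> (y,x) \<in> set ps" using y by (meson in_set_takeD)
  then have "mate ps x = y" using mate_eq[OF assms(1)] by blast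
  ultimately show ?thesis unfolding lvl_def by simp
qed

lemma hrel_props:
  assumes "(C1,C2) \<in> hrel d P Cs i"
  shows "C1 \<in> Cs \<and> C2 \<in> Cs \<and> active d P i C1 \<and> active d P i C2 \<and> C1 \<noteq> C2 \<and>
    (cdist d (terms P) Cs C1 C2 < 2 ^ (i + 1) \<or> cdist d (terms P) Cs C2 C1 < 2 ^ (i + 1))"
  using assms unfolding hrel_def Hedges_def by (auto simp: doubleton_eq_iff)

lemma hrel_sym: "(C1,C2) \<in> hrel d P Cs i \<Longrightarrow> (C2,C1) \<in> hrel d P Cs i"
  unfolding hrel_def by (simp add: insert_commute)

lemma hrel_rtrancl_sym: "(C1,C2) \<in> (hrel d P Cs i)\<^sup>* \<Longrightarrow> (C2,C1) \<in> (hrel d P Cs i)\<^sup>*"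
proof -
  have "sym (hrel d P Cs i)" by (auto intro: symI hrel_sym)
  then have "sym ((hrel d P Cs i)\<^sup>*)" by (rule sym_rtrancl)
  then show "(C1,C2) \<in> (hrel d P Cs i)\<^sup>* \<Longrightarrow> (C2,C1) \<in> (hrel d P Cs i)\<^sup>*" by (auto dest: symD)
qed

lemma hrel_comp:
  assumes "C \<in> Cs" "active d P i C" "(C,C') \<in> (hrel d P Cs i)\<^sup>*"
  shows "C' \<in> Cs \<and> active d P i C'"
  using assms(3)
proof (induction rule: rtrancl_induct)
  case base then show ?case using assms by simp
next
  case (step y z) then show ?case using hrel_props by blast
qed

lemma clus_Suc: "clus d P (Suc j) = {C\<in>clus d P j. \<not> active d P j C} \<union>
   {\<Union>{C'. (C,C')\<in>(hrel d P (clus d P j) j)\<^sup>*} | C. C\<in>clus d P j \<and> active d P j C}"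
  by (simp add: Let_def)

lemma clus_partition:
  "(\<forall>C\<in>clus d P i. C \<noteq> {} \<and> C \<subseteq> terms P) \<and> (\<forall>x\<in>terms P. \<exists>C\<in>clus d P i. x \<in> C) \<and>
   (\<forall>C1\<in>clus d P i. \<forall>C2\<in>clus d P i. \<forall>x. x \<in> C1 \<longrightarrow> x \<in> C2 \<longrightarrow> C1 = C2)"
proof (induction i)
  case 0 show ?case by auto
next
  case (Suc j)
  define Cs where "Cs = clus d P j"
  define r where "r = hrel d P Cs j"
  have IH1: "\<And>C. C \<in> Cs \<Longrightarrow> C \<noteq> {} \<and> C \<subseteq> terms P"
    and IH2: "\<And>x. x \<in> terms P \<Longrightarrow> \<exists>C\<in>Cs. x \<in> C"
    and IH3: "\<And>C1 C2 x. C1 \<in> Cs \<Longrightarrow> C2 \<in> Cs \<Longrightarrow> x \<in> C1 \<Longrightarrow> x \<in> C2 \<Longrightarrow> C1 = C2"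
    using Suc.IH unfolding Cs_def by blast+
  have eq: "clus d P (Suc j) = {C\<in>Cs. \<not> active d P j C} \<union> {\<Union>{C'. (C,C')\<in>r\<^sup>*} | C. C\<in>Cs \<and> active d P j C}"
    unfolding Cs_def r_def by (rule clus_Suc)
  have comp: "\<And>C C'. C \<in> Cs \<Longrightarrow> active d P j C \<Longrightarrow> (C,C') \<in> r\<^sup>* \<Longrightarrow> C' \<in> Cs \<and> active d P j C'"
    unfolding r_def by (rule hrel_comp)
  have rs: "\<And>a b. (a,b) \<in> r\<^sup>* \<Longrightarrow> (b,a) \<in> r\<^sup>*" unfolding r_def by (rule hrel_rtrancl_sym)
  have P1: "\<forall>C\<in>clus d P (Suc j). C \<noteq> {} \<and> C \<subseteq> terms P"
  proof
    fix C assume "C \<in> clus d P (Suc j)"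
    then consider "C \<in> Cs" | A where "C = \<Union>{C'. (A,C')\<in>r\<^sup>*}" "A \<in> Cs" "active d P j A"
      unfolding eq by blast
    then show "C \<noteq> {} \<and> C \<subseteq> terms P"
    proof cases
      case 1 then show ?thesis using IH1 by blast
    next
      case 2
      have "A \<subseteq> C" using 2 by blast
      moreover have "C \<subseteq> terms P" using 2 comp IH1 by blast
      ultimately show ?thesis using IH1[OF 2(2)] by blast
    qed
  qed
  have P2: "\<forall>x\<in>terms P. \<exists>C\<in>clus d P (Suc j). x \<in> C"
  proof
    fix x assume "x \<in> terms P"
    then obtain C where C: "C \<in> Cs" "x \<in> C" using IH2 by blast
    show "\<exists>C\<in>clus d P (Suc j). x \<in> C"
    proof (cases "active d P j C")
      case False
      have "C \<in> clus d P (Suc j)" unfolding eq using C False by simp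
      then show ?thesis using C(2) by (rule bexI[rotated])
    next
      case True
      have "\<Union>{C'. (C,C')\<in>r\<^sup>*} \<in> clus d P (Suc j)" unfolding eq
        by (rule UnI2, rule CollectI, rule exI[of _ C]) (simp add: C True)
      moreover have "x \<in> \<Union>{C'. (C,C')\<in>r\<^sup>*}" using C by blast
      ultimately show ?thesis by (rule bexI[rotated])
    qed
  qed
  have P3: "\<forall>C1\<in>clus d P (Suc j). \<forall>C2\<in>clus d P (Suc j). \<forall>x. x \<in> C1 \<longrightarrow> x \<in> C2 \<longrightarrow> C1 = C2"
  proof (intro ballI allI impI)
    fix C1 C2 x assume C1: "C1 \<in> clus d P (Suc j)" and C2: "C2 \<in> clus d P (Suc j)" and x: "x \<in> C1" "x \<in> C2"
    have U: "\<And>A B. A \<in> Cs \<Longrightarrow> active d P j A \<Longrightarrow> B \<in> Cs \<Longrightarrow> active d P j B \<Longrightarrow>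
       x \<in> \<Union>{C'. (A,C')\<in>r\<^sup>*} \<Longrightarrow> x \<in> \<Union>{C'. (B,C')\<in>r\<^sup>*} \<Longrightarrow> \<Union>{C'. (A,C')\<in>r\<^sup>*} = \<Union>{C'. (B,C')\<in>r\<^sup>*}"
    proof -
      fix A B assume A: "A \<in> Cs" "active d P j A" and B: "B \<in> Cs" "active d P j B"
        and xA: "x \<in> \<Union>{C'. (A,C')\<in>r\<^sup>*}" and xB: "x \<in> \<Union>{C'. (B,C')\<in>r\<^sup>*}"
      obtain A' where A': "(A,A') \<in> r\<^sup>*" "x \<in> A'" using xA by blast
      obtain B' where B': "(B,B') \<in> r\<^sup>*" "x \<in> B'" using xB by blast
      have "A' = B'" using IH3 comp A B A' B' by blast
      then have AB: "(A,B) \<in> r\<^sup>*" using A' B' rs rtrancl_trans by metis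
      have "{C'. (A,C')\<in>r\<^sup>*} = {C'. (B,C')\<in>r\<^sup>*}"
        using AB rs rtrancl_trans by metis
      then show "\<Union>{C'. (A,C')\<in>r\<^sup>*} = \<Union>{C'. (B,C')\<in>r\<^sup>*}" by simp
    qed
    have nU: "\<And>C A. C \<in> Cs \<Longrightarrow> \<not> active d P j C \<Longrightarrow> A \<in> Cs \<Longrightarrow> active d P j A \<Longrightarrow>
       x \<in> C \<Longrightarrow> x \<in> \<Union>{C'. (A,C')\<in>r\<^sup>*} \<Longrightarrow> False"
    proof -
      fix C A assume C: "C \<in> Cs" "\<not> active d P j C" and A: "A \<in> Cs" "active d P j A"
        and xC: "x \<in> C" and xA: "x \<in> \<Union>{C'. (A,C')\<in>r\<^sup>*}"
      obtain A' where A': "(A,A') \<in> r\<^sup>*" "x \<in> A'" using xA by blast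
      have "A' \<in> Cs" "active d P j A'" using comp A A' by blast+
      then show False using IH3 C xC A' by blast
    qed
    from C1 consider "C1 \<in> Cs" "\<not> active d P j C1" | A where "C1 = \<Union>{C'. (A,C')\<in>r\<^sup>*}" "A \<in> Cs" "active d P j A"
      unfolding eq by blast
    note c1 = this
    from C2 consider "C2 \<in> Cs" "\<not> active d P j C2" | B where "C2 = \<Union>{C'. (B,C')\<in>r\<^sup>*}" "B \<in> Cs" "active d P j B"
      unfolding eq by blast
    note c2 = this
    show "C1 = C2"
    proof (cases rule: c1)
      case 1
      then show ?thesis
      proof (cases rule: c2)
        case 1 then show ?thesis using IH3 x \<open>C1 \<in> Cs\<close> by blast
      next
        case (2 B) then show ?thesis using nU[of C1 B] x \<open>C1 \<in> Cs\<close> \<open>\<not> active d P j C1\<close> by blast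
      qed
    next
      case (2 A)
      then show ?thesis
      proof (cases rule: c2)
        case 1 then show ?thesis using nU[of C2 A] x 2 by blast
      next
        case (2 B) then show ?thesis using U[of A B] x \<open>C1 = _\<close> \<open>A \<in> Cs\<close> \<open>active d P j A\<close> by simp
      qed
    qed
  qed
  show ?case using P1 P2 P3 by blast
qed

lemma clus_P1: "\<forall>C\<in>clus d P i. C \<noteq> {} \<and> C \<subseteq> terms P"
  by (rule conjunct1[OF clus_partition])
lemma clus_P2: "\<forall>x\<in>terms P. \<exists>C\<in>clus d P i. x \<in> C"
  by (rule conjunct1[OF conjunct2[OF clus_partition]])
lemma clus_P3: "\<forall>C1\<in>clus d P i. \<forall>C2\<in>clus d P i. \<forall>x. x \<in> C1 \<longrightarrow> x \<in> C2 \<longrightarrow> C1 = C2"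
  by (rule conjunct2[OF conjunct2[OF clus_partition]])
lemma clus_nonempty: "C \<in> clus d P i \<Longrightarrow> C \<noteq> {}"
  by (drule bspec[OF clus_P1]) (erule conjunct1)
lemma clus_sub: "C \<in> clus d P i \<Longrightarrow> C \<subseteq> terms P"
  by (drule bspec[OF clus_P1]) (erule conjunct2)
lemma clus_cover: "x \<in> terms P \<Longrightarrow> \<exists>C\<in>clus d P i. x \<in> C"
  by (rule bspec[OF clus_P2])
lemma clus_disj: "C1 \<in> clus d P i \<Longrightarrow> C2 \<in> clus d P i \<Longrightarrow> x \<in> C1 \<Longrightarrow> x \<in> C2 \<Longrightarrow> C1 = C2"
proof -
  assume a: "C1 \<in> clus d P i" "C2 \<in> clus d P i" "x \<in> C1" "x \<in> C2"
  have "\<forall>x. x \<in> C1 \<longrightarrow> x \<in> C2 \<longrightarrow> C1 = C2" by (rule bspec[OF bspec[OF clus_P3 a(1)] a(2)])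
  then show ?thesis using a(3,4) by simp
qed
lemma clus_finite: "C \<in> clus d P i \<Longrightarrow> finite C"
  by (rule finite_subset[OF clus_sub finite_terms])
lemma clus_set_finite: "finite (clus d P i)"
proof -
  have "clus d P i \<subseteq> Pow (terms P)" by (intro subsetI PowI clus_sub)
  moreover have "finite (Pow (terms P))" by (simp add: finite_terms)
  ultimately show ?thesis by (rule finite_subset)
qed

lemma walk_cost_nonneg:
  assumes "set xs \<subseteq> V" "\<And>x y. x \<in> V \<Longrightarrow> y \<in> V \<Longrightarrow> 0 \<le> d x y"
  shows "0 \<le> walk_cost d Cs xs"
  unfolding walk_cost_def
proof (rule sum_list_nonneg)
  fix z assume "z \<in> set (map (\<lambda>(x, y). step_cost d Cs x y) (zip xs (tl xs)))"
  then obtain x y where xy: "(x,y) \<in> set (zip xs (tl xs))" "z = step_cost d Cs x y" by auto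
  have "x \<in> set xs" using xy(1) by (rule set_zip_leftD)
  moreover have "y \<in> set (tl xs)" using xy(1) by (rule set_zip_rightD)
  then have "y \<in> set xs" by (cases xs) auto
  ultimately have "x \<in> V" "y \<in> V" using assms(1) by auto
  then have "0 \<le> d x y" by (rule assms(2))
  then show "0 \<le> z" using xy(2) unfolding step_cost_def by auto
qed

lemma cdist_le_walk:
  assumes "xs \<noteq> []" "set xs \<subseteq> V" "hd xs \<in> C1" "last xs \<in> C2"
    and "\<And>x y. x \<in> V \<Longrightarrow> y \<in> V \<Longrightarrow> 0 \<le> d x y"
  shows "cdist d V Cs C1 C2 \<le> walk_cost d Cs xs"
  unfolding cdist_def
proof (rule cInf_lower)
  show "walk_cost d Cs xs \<in> {walk_cost d Cs xs |xs. xs \<noteq> [] \<and> set xs \<subseteq> V \<and> hd xs \<in> C1 \<and> last xs \<in> C2}"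
    using assms by blast
  show "bdd_below {walk_cost d Cs xs |xs. xs \<noteq> [] \<and> set xs \<subseteq> V \<and> hd xs \<in> C1 \<and> last xs \<in> C2}"
    by (rule bdd_belowI[of _ 0]) (use walk_cost_nonneg assms(5) in blast)
qed

lemma cdist_le_pair:
  assumes "x \<in> V" "y \<in> V" "x \<in> C1" "y \<in> C2"
    and "\<And>x y. x \<in> V \<Longrightarrow> y \<in> V \<Longrightarrow> 0 \<le> d x y"
  shows "cdist d V Cs C1 C2 \<le> d x y"
proof -
  have "cdist d V Cs C1 C2 \<le> walk_cost d Cs [x,y]"
    by (rule cdist_le_walk) (use assms in auto)
  also have "\<dots> = step_cost d Cs x y" by (simp add: walk_cost_def)
  also have "\<dots> \<le> d x y" using assms unfolding step_cost_def by auto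
  finally show ?thesis .
qed

lemma walk_cost_mono:
  assumes "set xs \<subseteq> V" "\<And>x y. x \<in> V \<Longrightarrow> y \<in> V \<Longrightarrow> 0 \<le> d x y"
    and same: "\<And>x y. (\<exists>C\<in>Cs. x \<in> C \<and> y \<in> C) \<Longrightarrow> (\<exists>C\<in>Cs'. x \<in> C \<and> y \<in> C)"
  shows "walk_cost d Cs' xs \<le> walk_cost d Cs xs"
  unfolding walk_cost_def
proof (rule sum_list_mono)
  fix z assume z: "z \<in> set (zip xs (tl xs))"
  obtain x y where xy: "z = (x,y)" by force
  have "x \<in> set xs" using z xy by (auto dest: set_zip_leftD)
  moreover have "y \<in> set (tl xs)" using z xy by (auto dest: set_zip_rightD)
  then have "y \<in> set xs" by (cases xs) auto
  ultimately have "x \<in> V" "y \<in> V" using assms(1) by auto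
  then have "0 \<le> d x y" by (rule assms(2))
  then show "(\<lambda>(x, y). step_cost d Cs' x y) z \<le> (\<lambda>(x, y). step_cost d Cs x y) z"
    using xy same unfolding step_cost_def by auto
qed

lemma cdist_mono:
  assumes V: "V \<subseteq> V'" and nn: "\<And>x y. x \<in> V' \<Longrightarrow> y \<in> V' \<Longrightarrow> 0 \<le> d x y"
    and same: "\<And>x y. (\<exists>C\<in>Cs. x \<in> C \<and> y \<in> C) \<Longrightarrow> (\<exists>C\<in>Cs'. x \<in> C \<and> y \<in> C)"
    and C1: "C1 \<subseteq> D1" "C1 \<noteq> {}" "C1 \<subseteq> V" and C2: "C2 \<subseteq> D2" "C2 \<noteq> {}" "C2 \<subseteq> V"
  shows "cdist d V' Cs' D1 D2 \<le> cdist d V Cs C1 C2"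
  unfolding cdist_def
proof (rule cInf_mono)
  obtain x y where xy: "x \<in> C1" "y \<in> C2" using C1 C2 by blast
  show "{walk_cost d Cs xs |xs. xs \<noteq> [] \<and> set xs \<subseteq> V \<and> hd xs \<in> C1 \<and> last xs \<in> C2} \<noteq> {}"
    using xy C1 C2 by (auto intro!: exI[of _ "[x,y]"])
  show "bdd_below {walk_cost d Cs' xs |xs. xs \<noteq> [] \<and> set xs \<subseteq> V' \<and> hd xs \<in> D1 \<and> last xs \<in> D2}"
    by (rule bdd_belowI[of _ 0]) (use walk_cost_nonneg nn in blast)
  fix b assume "b \<in> {walk_cost d Cs xs |xs. xs \<noteq> [] \<and> set xs \<subseteq> V \<and> hd xs \<in> C1 \<and> last xs \<in> C2}"
  then obtain xs where xs: "b = walk_cost d Cs xs" "xs \<noteq> []" "set xs \<subseteq> V" "hd xs \<in> C1" "last xs \<in> C2" by blast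
  have "walk_cost d Cs' xs \<le> walk_cost d Cs xs"
    by (rule walk_cost_mono[of xs V' d Cs Cs']) (use xs V nn same in auto)
  moreover have "walk_cost d Cs' xs \<in> {walk_cost d Cs' xs |xs. xs \<noteq> [] \<and> set xs \<subseteq> V' \<and> hd xs \<in> D1 \<and> last xs \<in> D2}"
    using xs V C1 C2 by blast
  ultimately show "\<exists>a\<in>{walk_cost d Cs' xs |xs. xs \<noteq> [] \<and> set xs \<subseteq> V' \<and> hd xs \<in> D1 \<and> last xs \<in> D2}. a \<le> b"
    using xs(1) by blast
qed

lemma clvl_ge:
  assumes "finite C" "z \<in> C"
  shows "lvl d P z \<le> clvl d P C"
  unfolding clvl_def using assms by (intro Max_ge) auto

lemma sep_lemma:
  assumes d1: "\<And>x y. x \<in> terms P \<Longrightarrow> y \<in> terms P \<Longrightarrow> x \<noteq> y \<Longrightarrow> 1 \<le> d x y"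
    and nn: "\<And>x y. x \<in> terms P \<Longrightarrow> y \<in> terms P \<Longrightarrow> 0 \<le> d x y"
    and x: "x \<in> terms P" and y: "y \<in> terms P"
    and lx: "int i \<le> lvl d P x" and ly: "int i \<le> lvl d P y" and dxy: "d x y < 2^i"
  shows "\<exists>C\<in>clus d P i. x \<in> C \<and> y \<in> C"
proof (cases i)
  case 0
  have "x = y"
  proof (rule ccontr)
    assume "x \<noteq> y" then have "1 \<le> d x y" using d1 x y by auto
    then show False using dxy 0 by simp
  qed
  moreover have "{x} \<in> clus d P i" using 0 x by simp
  ultimately show ?thesis by (intro bexI[of _ "{x}"]) auto
next
  case (Suc j)
  define Cs where "Cs = clus d P j"
  define r where "r = hrel d P Cs j"
  have eq: "clus d P (Suc j) = {C\<in>Cs. \<not> active d P j C} \<union> {\<Union>{C'. (C,C')\<in>r\<^sup>*} | C. C\<in>Cs \<and> active d P j C}"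
    unfolding Cs_def r_def by (rule clus_Suc)
  obtain Cx where Cx: "Cx \<in> Cs" "x \<in> Cx" using clus_cover[OF x] unfolding Cs_def by blast
  obtain Cy where Cy: "Cy \<in> Cs" "y \<in> Cy" using clus_cover[OF y] unfolding Cs_def by blast
  have act: "active d P j C" if "C \<in> Cs" "z \<in> C" "int i \<le> lvl d P z" for C z
  proof -
    have "finite C" using that(1) clus_finite unfolding Cs_def by blast
    then have "lvl d P z \<le> clvl d P C" using that(2) by (rule clvl_ge)
    then show ?thesis unfolding active_def using that(3) Suc by simp
  qed
  have ax: "active d P j Cx" using act Cx lx by blast
  have ay: "active d P j Cy" using act Cy ly by blast
  have mem: "\<Union>{C'. (Cx,C')\<in>r\<^sup>*} \<in> clus d P i" unfolding Suc eq
    by (rule UnI2, rule CollectI, rule exI[of _ Cx]) (simp add: Cx ax)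
  have xin: "x \<in> \<Union>{C'. (Cx,C')\<in>r\<^sup>*}" using Cx by blast
  have yin: "y \<in> \<Union>{C'. (Cx,C')\<in>r\<^sup>*}"
  proof (cases "Cx = Cy")
    case True then show ?thesis using Cy by blast
  next
    case False
    have "cdist d (terms P) Cs Cx Cy \<le> d x y"
      by (rule cdist_le_pair) (use x y Cx Cy nn in auto)
    then have "cdist d (terms P) Cs Cx Cy < 2 ^ (j+1)" using dxy Suc by simp
    then have "{Cx, Cy} \<in> Hedges d P Cs j" unfolding Hedges_def using Cx Cy ax ay False by blast
    then have "(Cx, Cy) \<in> r" unfolding r_def hrel_def by simp
    then show ?thesis using Cy by blast
  qed
  show ?thesis using mem xin yin by (intro bexI[of _ "\<Union>{C'. (Cx,C')\<in>r\<^sup>*}"]) auto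
qed

lemma active_mono:
  assumes "C \<subseteq> D" "C \<noteq> {}" "finite D" "C \<subseteq> terms P"
    and lv: "\<forall>x\<in>terms P. lvl d P x = lvl d P' x" and a: "active d P j C"
  shows "active d P' j D"
proof -
  have "lvl d P ` C = lvl d P' ` C" using assms(4) lv by (intro image_cong) auto
  then have "clvl d P C = Max (lvl d P' ` C)" unfolding clvl_def by simp
  also have "\<dots> \<le> Max (lvl d P' ` D)" using assms(1-3) by (intro Max_mono) auto
  finally show ?thesis using a unfolding active_def clvl_def by simp
qed

lemma hrel_mono:
  assumes hr: "(C1,C2) \<in> hrel d P Cs j"
    and V: "terms P \<subseteq> terms P'" and lv: "\<forall>x\<in>terms P. lvl d P x = lvl d P' x"
    and nn: "\<And>x y. x \<in> terms P' \<Longrightarrow> y \<in> terms P' \<Longrightarrow> 0 \<le> d x y"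
    and same: "\<And>x y. (\<exists>C\<in>Cs. x \<in> C \<and> y \<in> C) \<Longrightarrow> (\<exists>C\<in>Cs'. x \<in> C \<and> y \<in> C)"
    and Cs: "\<And>C. C \<in> Cs \<Longrightarrow> C \<noteq> {} \<and> C \<subseteq> terms P"
    and Cs': "\<And>C. C \<in> Cs' \<Longrightarrow> finite C"
    and D: "D1 \<in> Cs'" "D2 \<in> Cs'" "C1 \<subseteq> D1" "C2 \<subseteq> D2" "D1 \<noteq> D2"
  shows "(D1,D2) \<in> hrel d P' Cs' j"
proof -
  have hp: "C1 \<in> Cs" "C2 \<in> Cs" "active d P j C1" "active d P j C2"
    "cdist d (terms P) Cs C1 C2 < 2 ^ (j + 1) \<or> cdist d (terms P) Cs C2 C1 < 2 ^ (j + 1)"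
    using hrel_props[OF hr] by auto
  have a1: "active d P' j D1" by (rule active_mono[OF D(3) _ Cs'[OF D(1)] _ lv hp(3)]) (use Cs hp in auto)
  have a2: "active d P' j D2" by (rule active_mono[OF D(4) _ Cs'[OF D(2)] _ lv hp(4)]) (use Cs hp in auto)
  have c12: "cdist d (terms P') Cs' D1 D2 \<le> cdist d (terms P) Cs C1 C2"
    by (rule cdist_mono[OF V nn same]) (use Cs hp D in auto)
  have c21: "cdist d (terms P') Cs' D2 D1 \<le> cdist d (terms P) Cs C2 C1"
    by (rule cdist_mono[OF V nn same]) (use Cs hp D in auto)
  from hp(5) show ?thesis
  proof
    assume "cdist d (terms P) Cs C1 C2 < 2 ^ (j + 1)"
    then have "cdist d (terms P') Cs' D1 D2 < 2 ^ (j + 1)" using c12 by simp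
    then have "{D1,D2} \<in> Hedges d P' Cs' j" unfolding Hedges_def using D a1 a2 by blast
    then show ?thesis unfolding hrel_def by simp
  next
    assume "cdist d (terms P) Cs C2 C1 < 2 ^ (j + 1)"
    then have "cdist d (terms P') Cs' D2 D1 < 2 ^ (j + 1)" using c21 by simp
    then have "{D2,D1} \<in> Hedges d P' Cs' j" unfolding Hedges_def using D a1 a2 by blast
    then show ?thesis unfolding hrel_def by (simp add: insert_commute)
  qed
qed

lemma clus_mono:
  assumes V: "terms P \<subseteq> terms P'" and lv: "\<forall>x\<in>terms P. lvl d P x = lvl d P' x"
    and nn: "\<And>x y. x \<in> terms P' \<Longrightarrow> y \<in> terms P' \<Longrightarrow> 0 \<le> d x y"
  shows "\<forall>C\<in>clus d P i. \<exists>D\<in>clus d P' i. C \<subseteq> D"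
proof (induction i)
  case 0
  show ?case
  proof
    fix C assume "C \<in> clus d P 0"
    then obtain v where v: "v \<in> terms P" "C = {v}" by auto
    then have "{v} \<in> clus d P' 0" using V by auto
    then show "\<exists>D\<in>clus d P' 0. C \<subseteq> D" using v by (intro bexI[of _ "{v}"]) auto
  qed
next
  case (Suc j)
  define Cs where "Cs = clus d P j"
  define r where "r = hrel d P Cs j"
  define Cs' where "Cs' = clus d P' j"
  define r' where "r' = hrel d P' Cs' j"
  have IH: "\<And>C. C \<in> Cs \<Longrightarrow> \<exists>D\<in>Cs'. C \<subseteq> D" using Suc.IH unfolding Cs_def Cs'_def by blast
  have same: "\<And>x y. (\<exists>C\<in>Cs. x \<in> C \<and> y \<in> C) \<Longrightarrow> (\<exists>C\<in>Cs'. x \<in> C \<and> y \<in> C)"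
  proof -
    fix x y assume "\<exists>C\<in>Cs. x \<in> C \<and> y \<in> C"
    then obtain C where C: "C \<in> Cs" "x \<in> C" "y \<in> C" by blast
    obtain D where "D \<in> Cs'" "C \<subseteq> D" using IH[OF C(1)] by blast
    then show "\<exists>C\<in>Cs'. x \<in> C \<and> y \<in> C" using C by blast
  qed
  have Csp: "\<And>C. C \<in> Cs \<Longrightarrow> C \<noteq> {} \<and> C \<subseteq> terms P"
    unfolding Cs_def using clus_nonempty clus_sub by blast
  have Cs'f: "\<And>C. C \<in> Cs' \<Longrightarrow> finite C" unfolding Cs'_def by (rule clus_finite)
  have Cs'sub: "\<And>C. C \<in> Cs' \<Longrightarrow> C \<subseteq> terms P'" unfolding Cs'_def by (rule clus_sub)
  have eq: "clus d P (Suc j) = {C\<in>Cs. \<not> active d P j C} \<union> {\<Union>{C'. (C,C')\<in>r\<^sup>*} | C. C\<in>Cs \<and> active d P j C}"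
    unfolding Cs_def r_def by (rule clus_Suc)
  have eq': "clus d P' (Suc j) = {C\<in>Cs'. \<not> active d P' j C} \<union> {\<Union>{C'. (C,C')\<in>r'\<^sup>*} | C. C\<in>Cs' \<and> active d P' j C}"
    unfolding Cs'_def r'_def by (rule clus_Suc)
  have Umem: "\<Union>{C'. (D,C')\<in>r'\<^sup>*} \<in> clus d P' (Suc j)" if "D \<in> Cs'" "active d P' j D" for D
    unfolding eq' by (rule UnI2, rule CollectI, rule exI[of _ D]) (simp add: that)
  have U'mem: "\<exists>E\<in>clus d P' (Suc j). D \<subseteq> E" if D: "D \<in> Cs'" for D
  proof (cases "active d P' j D")
    case True
    have "D \<subseteq> \<Union>{C'. (D,C')\<in>r'\<^sup>*}" by blast
    then show ?thesis using Umem[OF D True] by (intro bexI[of _ "\<Union>{C'. (D,C')\<in>r'\<^sup>*}"])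
  next
    case False
    have "D \<in> clus d P' (Suc j)" unfolding eq' using D False by simp
    then show ?thesis by (intro bexI[of _ D]) auto
  qed
  show ?case
  proof (rule ballI)
    fix C assume "C \<in> clus d P (Suc j)"
    then consider (1) "C \<in> Cs" "\<not> active d P j C" | (2) A where "C = \<Union>{C'. (A,C')\<in>r\<^sup>*}" "A \<in> Cs" "active d P j A"
      unfolding eq by blast
    then show "\<exists>D\<in>clus d P' (Suc j). C \<subseteq> D"
    proof cases
      case 1
      obtain D where D: "D \<in> Cs'" "C \<subseteq> D" using IH[OF 1(1)] by blast
      obtain E where E: "E \<in> clus d P' (Suc j)" "D \<subseteq> E" using U'mem[OF D(1)] by blast
      show ?thesis using E D(2) by (intro bexI[of _ E]) auto
    next
      case 2
      obtain D0 where D0: "D0 \<in> Cs'" "A \<subseteq> D0" using IH[OF 2(2)] by blast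
      have a0: "active d P' j D0"
        by (rule active_mono[OF D0(2) _ Cs'f[OF D0(1)] _ lv 2(3)]) (use Csp 2 in auto)
      have claim: "\<exists>D'\<in>Cs'. C' \<subseteq> D' \<and> (D0,D') \<in> r'\<^sup>*" if "(A,C') \<in> r\<^sup>*" for C'
        using that
      proof (induction rule: rtrancl_induct)
        case base then show ?case using D0 by blast
      next
        case (step C' C'')
        obtain D' where D': "D' \<in> Cs'" "C' \<subseteq> D'" "(D0,D') \<in> r'\<^sup>*" using step.IH by blast
        have "C'' \<in> Cs" using hrel_props step.hyps(2) unfolding r_def by blast
        then obtain D'' where D'': "D'' \<in> Cs'" "C'' \<subseteq> D''" using IH by blast
        show ?case
        proof (cases "D' = D''")
          case True then show ?thesis using D' D'' by blast
        next
          case False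
          have "(D', D'') \<in> r'" unfolding r'_def
            by (rule hrel_mono[OF step.hyps(2)[unfolded r_def] V lv nn same Csp Cs'f D'(1) D''(1) D'(2) D''(2) False])
          then show ?thesis using D' D'' by (meson rtrancl_into_rtrancl)
        qed
      qed
      have "C \<subseteq> \<Union>{C'. (D0,C')\<in>r'\<^sup>*}"
      proof
        fix x assume "x \<in> C"
        then obtain C' where "(A,C') \<in> r\<^sup>*" "x \<in> C'" using 2(1) by blast
        then show "x \<in> \<Union>{C'. (D0,C')\<in>r'\<^sup>*}" using claim by blast
      qed
      then show ?thesis using Umem[OF D0(1) a0] by (intro bexI[of _ "\<Union>{C'. (D0,C')\<in>r'\<^sup>*}"])
    qed
  qed
qed

definition cls :: "'a set set \<Rightarrow> 'a set \<Rightarrow> 'a \<Rightarrow> 'a set" where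
  "cls G V v = {w\<in>V. (v,w) \<in> conn G}"

definition comps :: "'a set set \<Rightarrow> 'a set \<Rightarrow> nat" where
  "comps G V = card (cls G V ` V)"

lemma conn_sym: "(a,b) \<in> conn G \<Longrightarrow> (b,a) \<in> conn G"
proof -
  have "sym {(a, b). {a, b} \<in> G}" by (auto intro: symI simp: insert_commute)
  then have "sym (conn G)" unfolding conn_def by (rule sym_rtrancl)
  then show "(a,b) \<in> conn G \<Longrightarrow> (b,a) \<in> conn G" by (auto dest: symD)
qed

lemma conn_trans: "(a,b) \<in> conn G \<Longrightarrow> (b,c) \<in> conn G \<Longrightarrow> (a,c) \<in> conn G"
  unfolding conn_def by (rule rtrancl_trans)

lemma conn_refl: "(a,a) \<in> conn G"
  unfolding conn_def by simp

lemma conn_mono: "G \<subseteq> G' \<Longrightarrow> conn G \<subseteq> conn G'"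
  unfolding conn_def by (rule rtrancl_mono) auto

lemma conn_edge: "{a,b} \<in> G \<Longrightarrow> (a,b) \<in> conn G"
  unfolding conn_def by auto

lemma cls_eq: assumes "(a,b) \<in> conn G" shows "cls G V a = cls G V b"
proof -
  have ba: "(b,a) \<in> conn G" by (rule conn_sym[OF assms])
  show ?thesis unfolding cls_def by (auto dest: conn_trans[OF ba] conn_trans[OF assms])
qed

lemma cls_self: "v \<in> V \<Longrightarrow> v \<in> cls G V v"
  unfolding cls_def by (simp add: conn_refl)

lemma comps_conn_eq: "conn G = conn G' \<Longrightarrow> comps G V = comps G' V"
  unfolding comps_def cls_def by simp

lemma card_image_less:
  assumes "finite A" "x \<in> A" "y \<in> A" "x \<noteq> y" "g x = g y"
  shows "card (g ` A) < card A"
proof -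
  have "\<not> inj_on g A" using assms unfolding inj_on_def by blast
  then have "card (g ` A) \<noteq> card A" using inj_on_iff_eq_card[OF assms(1), of g] by simp
  moreover have "card (g ` A) \<le> card A" using assms(1) by (rule card_image_le)
  ultimately show ?thesis by simp
qed

lemma comps_merge:
  assumes "finite V" "G \<subseteq> G'" "a \<in> V" "b \<in> V" "(a,b) \<notin> conn G" "(a,b) \<in> conn G'"
  shows "comps G' V < comps G V"
proof -
  define g where "g K = \<Union> (cls G' V ` K)" for K
  have gc: "g (cls G V v) = cls G' V v" if v: "v \<in> V" for v
  proof
    show "g (cls G V v) \<subseteq> cls G' V v"
    proof
      fix w assume "w \<in> g (cls G V v)"
      then obtain u where u: "u \<in> cls G V v" "w \<in> cls G' V u" unfolding g_def by blast
      have "(v,u) \<in> conn G'" using u(1) conn_mono[OF assms(2)] unfolding cls_def by blast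
      then show "w \<in> cls G' V v" using u(2) cls_eq by metis
    qed
    show "cls G' V v \<subseteq> g (cls G V v)" unfolding g_def using cls_self[OF v] by blast
  qed
  have img: "cls G' V ` V = g ` (cls G V ` V)"
    by (simp add: image_image gc cong: image_cong)
  have ne: "cls G V a \<noteq> cls G V b"
  proof
    assume "cls G V a = cls G V b"
    then have "b \<in> cls G V a" using cls_self[OF assms(4)] by simp
    then show False using assms(5) unfolding cls_def by blast
  qed
  have geq: "g (cls G V a) = g (cls G V b)" using gc assms(3,4) cls_eq[OF assms(6)] by simp
  have "card (g ` (cls G V ` V)) < card (cls G V ` V)"
    by (rule card_image_less[OF _ _ _ ne geq]) (use assms in auto)
  then show ?thesis unfolding comps_def img .
qed

lemma forest_count:
  assumes fo: "is_forest F" and GF: "G \<subseteq> F" and finF: "finite F" and finV: "finite V"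
    and edges: "\<And>e. e \<in> F \<Longrightarrow> \<exists>a b. e = {a,b} \<and> a \<in> V \<and> b \<in> V"
  shows "card (F - G) + comps F V \<le> comps G V"
proof -
  have "finite (F - G)" using finF by simp
  have main: "card A + comps (G \<union> A) V \<le> comps G V" if "A \<subseteq> F - G" for A
  proof -
    have "finite A" using that finF finite_subset by blast
    then show ?thesis using that
    proof (induction A rule: finite_induct)
      case empty then show ?case by simp
    next
      case (insert e A)
      have eF: "e \<in> F" "e \<notin> G" using insert.prems by auto
      obtain a b where ab: "e = {a,b}" "a \<in> V" "b \<in> V" using edges[OF eF(1)] by blast
      have nc: "(a,b) \<notin> conn (F - {e})" using fo eF(1) ab(1) unfolding is_forest_def by blast
      have sub: "G \<union> A \<subseteq> F - {e}" using insert.prems insert.hyps(2) GF eF by blast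
      have "(a,b) \<notin> conn (G \<union> A)" using nc conn_mono[OF sub] by blast
      moreover have "(a,b) \<in> conn (G \<union> insert e A)" using ab(1) by (intro conn_edge) auto
      ultimately have "comps (G \<union> insert e A) V < comps (G \<union> A) V"
        by (intro comps_merge[OF finV _ ab(2,3)]) auto
      moreover have "card (insert e A) = card A + 1" using insert.hyps by simp
      moreover have "card A + comps (G \<union> A) V \<le> comps G V" using insert.IH insert.prems by blast
      ultimately show ?case by linarith
    qed
  qed
  have "G \<union> (F - G) = F" using GF by blast
  then show ?thesis using main[of "F - G"] by simp
qed

lemma card_factor:
  assumes "finite A" "\<And>x y. x\<in>A \<Longrightarrow> y\<in>A \<Longrightarrow> c x = c y \<Longrightarrow> f x = f y"
  shows "card (f ` A) \<le> card (c ` A)"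
proof -
  define h where "h K = f (SOME x. x \<in> A \<and> c x = K)" for K
  have "f ` A = h ` (c ` A)"
  proof -
    have "h (c x) = f x" if "x \<in> A" for x
    proof -
      have "\<exists>x'. x' \<in> A \<and> c x' = c x" using that by blast
      then have "(SOME x'. x' \<in> A \<and> c x' = c x) \<in> A \<and> c (SOME x'. x' \<in> A \<and> c x' = c x) = c x"
        by (rule someI_ex)
      then show ?thesis unfolding h_def using assms(2) that by blast
    qed
    then show ?thesis by (simp add: image_image cong: image_cong)
  qed
  then show ?thesis using card_image_le assms(1) by (metis finite_imageI)
qed

definition Vt :: "(nat \<Rightarrow> nat \<Rightarrow> real) \<Rightarrow> (nat \<times> nat) list \<Rightarrow> nat \<Rightarrow> nat \<Rightarrow> nat set set" where
  "Vt d ps t i = {C \<in> clus d (take t ps) i. active d (take t ps) i C}"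

definition Old :: "(nat \<Rightarrow> nat \<Rightarrow> real) \<Rightarrow> (nat \<times> nat) list \<Rightarrow> nat \<Rightarrow> nat \<Rightarrow> nat set set" where
  "Old d ps t i = {D \<in> Vt d ps t i. \<exists>C\<in>Vt d ps (t-1) i. C \<subseteq> D}"

definition New :: "(nat \<Rightarrow> nat \<Rightarrow> real) \<Rightarrow> (nat \<times> nat) list \<Rightarrow> nat \<Rightarrow> nat \<Rightarrow> nat set set" where
  "New d ps t i = Vt d ps t i - Old d ps t i"

lemma vi_pdist: "valid_instance d ps \<Longrightarrow> pdist ps"
  unfolding valid_instance_def pdist_def by simp

lemma vi_nn: "valid_instance d ps \<Longrightarrow> x \<in> terms ps \<Longrightarrow> y \<in> terms ps \<Longrightarrow> 0 \<le> d x y"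
  unfolding valid_instance_def by (cases "x = y") (auto intro: order.trans[OF zero_le_one])

lemma vi_d1: "valid_instance d ps \<Longrightarrow> x \<in> terms ps \<Longrightarrow> y \<in> terms ps \<Longrightarrow> x \<noteq> y \<Longrightarrow> 1 \<le> d x y"
  unfolding valid_instance_def by auto

lemma prefix_lvl:
  assumes "valid_instance d ps" "s \<le> t"
  shows "\<forall>x\<in>terms (take s ps). lvl d (take s ps) x = lvl d (take t ps) x"
proof
  fix x assume x: "x \<in> terms (take s ps)"
  have xt: "x \<in> terms (take t ps)" using x terms_take_mono[OF assms(2)] by blast
  show "lvl d (take s ps) x = lvl d (take t ps) x"
    using lvl_take[OF vi_pdist[OF assms(1)] x] lvl_take[OF vi_pdist[OF assms(1)] xt] by simp
qed

lemma prefix_nn: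
  assumes "valid_instance d ps"
  shows "\<And>x y. x \<in> terms (take t ps) \<Longrightarrow> y \<in> terms (take t ps) \<Longrightarrow> 0 \<le> d x y"
  using vi_nn[OF assms] terms_take_sub by blast

lemma clus_prefix_mono:
  assumes "valid_instance d ps" "s \<le> t" "C \<in> clus d (take s ps) i"
  shows "\<exists>D\<in>clus d (take t ps) i. C \<subseteq> D"
  by (rule bspec[OF clus_mono[OF terms_take_mono[OF assms(2)] prefix_lvl[OF assms(1,2)] prefix_nn[OF assms(1)]] assms(3)])

lemma hrel_prefix_mono:
  assumes vi: "valid_instance d ps" and st: "s \<le> t"
    and hr: "(C1,C2) \<in> hrel d (take s ps) (clus d (take s ps) i) i"
    and D: "D1 \<in> clus d (take t ps) i" "D2 \<in> clus d (take t ps) i" "C1 \<subseteq> D1" "C2 \<subseteq> D2" "D1 \<noteq> D2"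
  shows "(D1,D2) \<in> hrel d (take t ps) (clus d (take t ps) i) i"
proof (rule hrel_mono[OF hr terms_take_mono[OF st] prefix_lvl[OF vi st] prefix_nn[OF vi] _ _ _ D])
  fix x y assume "\<exists>C\<in>clus d (take s ps) i. x \<in> C \<and> y \<in> C"
  then obtain C where C: "C \<in> clus d (take s ps) i" "x \<in> C" "y \<in> C" by (elim bexE conjE)
  obtain D where D: "D \<in> clus d (take t ps) i" "C \<subseteq> D" using clus_prefix_mono[OF vi st C(1)] by (elim bexE)
  show "\<exists>C\<in>clus d (take t ps) i. x \<in> C \<and> y \<in> C" using C D by (intro bexI[of _ D]) auto
next
  fix C assume "C \<in> clus d (take s ps) i"
  then show "C \<noteq> {} \<and> C \<subseteq> terms (take s ps)" using clus_nonempty clus_sub by (intro conjI)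
next
  fix C assume "C \<in> clus d (take t ps) i"
  then show "finite C" by (rule clus_finite)
qed

lemma clus_empty: "clus d (take 0 ps) i = {}"
proof -
  have "C \<notin> clus d (take 0 ps) i" for C
  proof
    assume C: "C \<in> clus d (take 0 ps) i"
    have "C \<subseteq> terms (take 0 ps)" using C by (rule clus_sub)
    moreover have "terms (take 0 ps) = {}" by (simp add: terms_def)
    ultimately show False using clus_nonempty[OF C] by blast
  qed
  then show ?thesis by blast
qed

lemma Vt0: "Vt d ps 0 i = {}"
  unfolding Vt_def using clus_empty by blast

lemma old_witness:
  assumes vi: "valid_instance d ps" and t: "1 \<le> t"
    and D: "D \<in> clus d (take t ps) i" "x \<in> D" and x: "x \<in> terms (take (t-1) ps)"
    and lx: "int i \<le> lvl d ps x"
  shows "\<exists>C\<in>Vt d ps (t-1) i. C \<subseteq> D"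
proof -
  obtain C where C: "C \<in> clus d (take (t-1) ps) i" "x \<in> C" using clus_cover[OF x] by blast
  obtain D' where D': "D' \<in> clus d (take t ps) i" "C \<subseteq> D'" using clus_prefix_mono[OF vi _ C(1), of t] by auto
  have "D' = D" using clus_disj[OF D'(1) D(1)] D'(2) C(2) D(2) by blast
  have "lvl d (take (t-1) ps) x \<le> clvl d (take (t-1) ps) C"
    by (rule clvl_ge[OF clus_finite[OF C(1)] C(2)])
  moreover have "lvl d (take (t-1) ps) x = lvl d ps x" by (rule lvl_take[OF vi_pdist[OF vi] x])
  ultimately have "active d (take (t-1) ps) i C" unfolding active_def using lx by simp
  then have "C \<in> Vt d ps (t-1) i" unfolding Vt_def using C(1) by simp
  then show ?thesis using D'(2) \<open>D' = D\<close> by blast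
qed

lemma terms_snoc: "terms (xs @ [p]) = terms xs \<union> {fst p, snd p}"
  by (auto simp: terms_def)

lemma take_last:
  assumes "1 \<le> t" "t \<le> length ps"
  shows "take t ps = take (t-1) ps @ [ps ! (t-1)]"
proof -
  have "t = Suc (t-1)" using assms by simp
  then have "take t ps = take (Suc (t-1)) ps" by simp
  also have "\<dots> = take (t-1) ps @ [ps ! (t-1)]" using assms by (intro take_Suc_conv_app_nth) simp
  finally show ?thesis .
qed

lemma new_prop:
  assumes vi: "valid_instance d ps" and t: "1 \<le> t" "t \<le> length ps" and D: "D \<in> New d ps t i"
  shows "\<exists>x\<in>D. x \<in> {fst (ps!(t-1)), snd (ps!(t-1))} \<and> int i \<le> lvl d ps x"
proof -
  have DV: "D \<in> clus d (take t ps) i" "active d (take t ps) i D" using D unfolding New_def Vt_def by auto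
  have nold: "\<not> (\<exists>C\<in>Vt d ps (t-1) i. C \<subseteq> D)" using D unfolding New_def Old_def by blast
  have fin: "finite D" and ne: "D \<noteq> {}" using clus_finite[OF DV(1)] clus_nonempty[OF DV(1)] by auto
  have "clvl d (take t ps) D \<in> lvl d (take t ps) ` D" unfolding clvl_def using fin ne by simp
  then obtain x where x: "x \<in> D" "lvl d (take t ps) x = clvl d (take t ps) D" by auto
  have xt: "x \<in> terms (take t ps)" using x(1) clus_sub[OF DV(1)] by blast
  have lx: "int i \<le> lvl d ps x" using x DV(2) lvl_take[OF vi_pdist[OF vi] xt] unfolding active_def by simp
  have "x \<notin> terms (take (t-1) ps)" using old_witness[OF vi t(1) DV(1) x(1) _ lx] nold by blast
  then have "x \<in> {fst (ps!(t-1)), snd (ps!(t-1))}" using xt unfolding take_last[OF t] terms_snoc by blast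
  then show ?thesis using x(1) lx by blast
qed

lemma Vt_finite: "finite (Vt d ps t i)"
  unfolding Vt_def using clus_set_finite by simp

lemma card_New:
  assumes vi: "valid_instance d ps" and t: "1 \<le> t" "t \<le> length ps"
  shows "card (New d ps t i) \<le> 2"
proof -
  define U where "U = {fst (ps!(t-1)), snd (ps!(t-1))}"
  define pick where "pick D = (SOME x. x \<in> D \<and> x \<in> U)" for D
  have pk: "pick D \<in> D \<and> pick D \<in> U" if "D \<in> New d ps t i" for D
  proof -
    have "\<exists>x. x \<in> D \<and> x \<in> U" using new_prop[OF vi t that] unfolding U_def by blast
    then show ?thesis unfolding pick_def by (rule someI_ex)
  qed
  have NC: "New d ps t i \<subseteq> clus d (take t ps) i" unfolding New_def Vt_def by auto
  have inj: "inj_on pick (New d ps t i)"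
  proof (rule inj_onI)
    fix D1 D2 assume a: "D1 \<in> New d ps t i" "D2 \<in> New d ps t i" "pick D1 = pick D2"
    have "D1 \<in> clus d (take t ps) i" "D2 \<in> clus d (take t ps) i" using a NC by auto
    moreover have "pick D1 \<in> D1" "pick D1 \<in> D2" using pk[OF a(1)] pk[OF a(2)] a(3) by auto
    ultimately show "D1 = D2" by (rule clus_disj)
  qed
  have "card (New d ps t i) = card (pick ` New d ps t i)" using inj by (simp add: card_image)
  also have "\<dots> \<le> card U" by (rule card_mono) (use pk in \<open>auto simp: U_def\<close>)
  also have "\<dots> \<le> 2" unfolding U_def by (simp add: card_insert_le_m1)
  finally show ?thesis .
qed

lemma adm_facts:
  assumes "admissible d ps Finh F" "1 \<le> t" "t \<le> length ps"
  shows "spanning_forest (inherited d ps t i (F (t-1) i) \<inter> H d ps t i) (Finh t i)"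
    "Finh t i \<subseteq> F t i" "spanning_forest (H d ps t i) (F t i)"
  using assms unfolding admissible_def by auto

lemma F_sub_H:
  assumes "admissible d ps Finh F" "t \<le> length ps"
  shows "F t i \<subseteq> H d ps t i"
proof (cases "t = 0")
  case True then show ?thesis using assms(1) unfolding admissible_def by simp
next
  case False
  then have "spanning_forest (H d ps t i) (F t i)" using adm_facts[OF assms(1) _ assms(2)] by simp
  then show ?thesis unfolding spanning_forest_def by simp
qed

lemma H_edge:
  assumes "e \<in> H d ps t i"
  shows "\<exists>a b. e = {a,b} \<and> a \<in> Vt d ps t i \<and> b \<in> Vt d ps t i"
proof -
  from assms obtain C1 C2 where C: "e = {C1,C2}" "C1 \<in> clus d (take t ps) i" "C2 \<in> clus d (take t ps) i"
    "active d (take t ps) i C1" "active d (take t ps) i C2"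
    unfolding H_def Hedges_def by (elim CollectE exE conjE) simp
  have "C1 \<in> Vt d ps t i" "C2 \<in> Vt d ps t i" unfolding Vt_def using C by simp_all
  then show ?thesis using C(1) by (intro exI[of _ C1] exI[of _ C2]) simp
qed

lemma H_hrel: "{a,b} \<in> H d ps t i \<Longrightarrow> (a,b) \<in> hrel d (take t ps) (clus d (take t ps) i) i"
  unfolding H_def hrel_def by simp

lemma hrel_H: "(a,b) \<in> hrel d (take t ps) (clus d (take t ps) i) i \<Longrightarrow> {a,b} \<in> H d ps t i"
  unfolding H_def hrel_def by simp

lemma H_finite: "finite (H d ps t i)"
proof -
  have "H d ps t i \<subseteq> Pow (Vt d ps t i)"
  proof
    fix e assume "e \<in> H d ps t i"
    then obtain a b where "e = {a,b}" "a \<in> Vt d ps t i" "b \<in> Vt d ps t i" by (elim H_edge[elim_format] exE conjE)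
    then show "e \<in> Pow (Vt d ps t i)" by simp
  qed
  moreover have "finite (Pow (Vt d ps t i))" using Vt_finite by simp
  ultimately show ?thesis by (rule finite_subset)
qed

lemma conn_span: "spanning_forest G F \<Longrightarrow> conn F = conn G"
proof -
  assume "spanning_forest G F"
  then have "F \<subseteq> G" "\<forall>a b. (a, b) \<in> conn G \<longrightarrow> (a, b) \<in> conn F" unfolding spanning_forest_def by auto
  then show ?thesis using conn_mono[of F G] by auto
qed

definition Dof :: "(nat \<Rightarrow> nat \<Rightarrow> real) \<Rightarrow> (nat \<times> nat) list \<Rightarrow> nat \<Rightarrow> nat \<Rightarrow> nat set \<Rightarrow> nat set" where
  "Dof d ps t i C = (SOME D. D \<in> clus d (take t ps) i \<and> C \<subseteq> D)"

lemma Dof_prop: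
  assumes vi: "valid_instance d ps" and C: "C \<in> clus d (take (t-1) ps) i"
  shows "Dof d ps t i C \<in> clus d (take t ps) i \<and> C \<subseteq> Dof d ps t i C"
proof -
  have "\<exists>D\<in>clus d (take t ps) i. C \<subseteq> D" by (rule clus_prefix_mono[OF vi _ C]) simp
  then obtain D where "D \<in> clus d (take t ps) i" "C \<subseteq> D" by (elim bexE)
  then have "\<exists>D. D \<in> clus d (take t ps) i \<and> C \<subseteq> D" by (intro exI[of _ D] conjI)
  then show ?thesis unfolding Dof_def by (rule someI_ex)
qed

lemma Dof_unique:
  assumes vi: "valid_instance d ps" and C: "C \<in> clus d (take (t-1) ps) i"
    and D: "D \<in> clus d (take t ps) i" "C \<subseteq> D"
  shows "Dof d ps t i C = D"
proof -
  obtain x where x: "x \<in> C" using clus_nonempty[OF C] by blast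
  have p: "Dof d ps t i C \<in> clus d (take t ps) i" "C \<subseteq> Dof d ps t i C" using Dof_prop[OF vi C] by auto
  have "x \<in> Dof d ps t i C" "x \<in> D" using x p(2) D(2) by auto
  then show ?thesis by (rule clus_disj[OF p(1) D(1)])
qed

lemma Dof_conn:
  assumes vi: "valid_instance d ps" and adm: "admissible d ps Finh F"
    and t: "1 \<le> t" "t \<le> length ps" and c: "(C1,C2) \<in> conn (F (t-1) i)"
  shows "(Dof d ps t i C1, Dof d ps t i C2) \<in> conn (inherited d ps t i (F (t-1) i) \<inter> H d ps t i)"
proof -
  define Q where "Q = inherited d ps t i (F (t-1) i) \<inter> H d ps t i"
  have FH: "F (t-1) i \<subseteq> H d ps (t-1) i" using F_sub_H[OF adm] t by simp
  from c have "(C1,C2) \<in> {(a,b). {a,b} \<in> F (t-1) i}\<^sup>*" unfolding conn_def .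
  then have "(Dof d ps t i C1, Dof d ps t i C2) \<in> conn Q"
  proof (induction rule: rtrancl_induct)
    case base then show ?case by (rule conn_refl)
  next
    case (step y z)
    have yzF: "{y,z} \<in> F (t-1) i" using step.hyps(2) by auto
    have hr: "(y,z) \<in> hrel d (take (t-1) ps) (clus d (take (t-1) ps) i) i"
    proof -
      have "{y,z} \<in> H d ps (t-1) i" using FH yzF by (rule subsetD)
      then show ?thesis by (rule H_hrel)
    qed
    have yc: "y \<in> clus d (take (t-1) ps) i" and zc: "z \<in> clus d (take (t-1) ps) i"
      using hrel_props[OF hr] by auto
    have Py: "Dof d ps t i y \<in> clus d (take t ps) i" "y \<subseteq> Dof d ps t i y" using Dof_prop[OF vi yc] by auto
    have Pz: "Dof d ps t i z \<in> clus d (take t ps) i" "z \<subseteq> Dof d ps t i z" using Dof_prop[OF vi zc] by auto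
    show ?case
    proof (cases "Dof d ps t i y = Dof d ps t i z")
      case True then show ?thesis using step.IH by simp
    next
      case False
      have inh: "{Dof d ps t i y, Dof d ps t i z} \<in> inherited d ps t i (F (t-1) i)"
        unfolding inherited_def
        by (rule CollectI, rule exI[of _ y], rule exI[of _ z], rule exI[of _ "Dof d ps t i y"],
            rule exI[of _ "Dof d ps t i z"]) (use yzF Py Pz False in auto)
      have "(Dof d ps t i y, Dof d ps t i z) \<in> hrel d (take t ps) (clus d (take t ps) i) i"
        by (rule hrel_prefix_mono[OF vi _ hr Py(1) Pz(1) Py(2) Pz(2) False]) simp
      then have "{Dof d ps t i y, Dof d ps t i z} \<in> H d ps t i" by (rule hrel_H)
      then have "{Dof d ps t i y, Dof d ps t i z} \<in> Q" using inh unfolding Q_def by simp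
      then have "(Dof d ps t i y, Dof d ps t i z) \<in> conn Q" by (rule conn_edge)
      then show ?thesis by (rule conn_trans[OF step.IH])
    qed
  qed
  then show ?thesis unfolding Q_def .
qed

lemma step_ineq:
  assumes vi: "valid_instance d ps" and adm: "admissible d ps Finh F"
    and t: "1 \<le> t" "t \<le> length ps"
  shows "card (F t i - Finh t i) + comps (H d ps t i) (Vt d ps t i)
     \<le> comps (H d ps (t-1) i) (Vt d ps (t-1) i) + card (New d ps t i)"
proof -
  define Q where "Q = inherited d ps t i (F (t-1) i) \<inter> H d ps t i"
  define V where "V = Vt d ps t i"
  define Vp where "Vp = Vt d ps (t-1) i"
  have sfQ: "spanning_forest Q (Finh t i)" and FF: "Finh t i \<subseteq> F t i"
    and sfH: "spanning_forest (H d ps t i) (F t i)"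
    using adm_facts[OF adm t] unfolding Q_def by auto
  have FH: "F t i \<subseteq> H d ps t i" using sfH unfolding spanning_forest_def by simp
  have a: "card (F t i - Finh t i) + comps (F t i) V \<le> comps (Finh t i) V"
  proof (rule forest_count)
    show "is_forest (F t i)" using sfH unfolding spanning_forest_def by simp
    show "Finh t i \<subseteq> F t i" by (rule FF)
    show "finite (F t i)" by (rule finite_subset[OF FH H_finite])
    show "finite V" unfolding V_def by (rule Vt_finite)
    fix e assume "e \<in> F t i"
    then have "e \<in> H d ps t i" using FH by (rule subsetD[rotated])
    then show "\<exists>a b. e = {a, b} \<and> a \<in> V \<and> b \<in> V" unfolding V_def by (rule H_edge)
  qed
  have b: "comps (F t i) V = comps (H d ps t i) V" by (rule comps_conn_eq[OF conn_span[OF sfH]])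
  have c: "comps (Finh t i) V = comps Q V" by (rule comps_conn_eq[OF conn_span[OF sfQ]])
  have "Old d ps t i \<subseteq> V" unfolding Old_def V_def by auto
  then have VON: "V = Old d ps t i \<union> New d ps t i" unfolding New_def V_def by auto
  have finV: "finite V" unfolding V_def by (rule Vt_finite)
  have finN: "finite (New d ps t i)" using finV VON by simp
  have d: "comps Q V \<le> card (cls Q V ` Old d ps t i) + card (New d ps t i)"
  proof -
    have "comps Q V = card (cls Q V ` Old d ps t i \<union> cls Q V ` New d ps t i)"
      unfolding comps_def by (subst VON) (simp only: image_Un)
    also have "\<dots> \<le> card (cls Q V ` Old d ps t i) + card (cls Q V ` New d ps t i)" by (rule card_Un_le)
    also have "card (cls Q V ` New d ps t i) \<le> card (New d ps t i)" using finN by (rule card_image_le)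
    finally show ?thesis by simp
  qed
  have finVp: "finite Vp" unfolding Vp_def by (rule Vt_finite)
  have sub: "cls Q V ` Old d ps t i \<subseteq> (\<lambda>C. cls Q V (Dof d ps t i C)) ` Vp"
  proof
    fix K assume "K \<in> cls Q V ` Old d ps t i"
    then obtain D where D: "D \<in> Old d ps t i" "K = cls Q V D" by (elim imageE) simp
    then obtain C where C: "C \<in> Vp" "C \<subseteq> D" unfolding Old_def Vp_def by auto
    have Cc: "C \<in> clus d (take (t-1) ps) i" using C(1) unfolding Vp_def Vt_def by simp
    have Dc: "D \<in> clus d (take t ps) i" using D(1) unfolding Old_def Vt_def by simp
    have "Dof d ps t i C = D" by (rule Dof_unique[OF vi Cc Dc C(2)])
    then show "K \<in> (\<lambda>C. cls Q V (Dof d ps t i C)) ` Vp" using C(1) D(2) by (intro image_eqI[of _ _ C]) simp_all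
  qed
  have e1: "card (cls Q V ` Old d ps t i) \<le> card ((\<lambda>C. cls Q V (Dof d ps t i C)) ` Vp)"
    by (rule card_mono[OF _ sub]) (use finVp in simp)
  have e2: "card ((\<lambda>C. cls Q V (Dof d ps t i C)) ` Vp) \<le> card (cls (H d ps (t-1) i) Vp ` Vp)"
  proof (rule card_factor[OF finVp])
    fix C1 C2 assume C: "C1 \<in> Vp" "C2 \<in> Vp" "cls (H d ps (t-1) i) Vp C1 = cls (H d ps (t-1) i) Vp C2"
    have "C2 \<in> cls (H d ps (t-1) i) Vp C1" using C cls_self[OF C(2)] by simp
    then have hc: "(C1,C2) \<in> conn (H d ps (t-1) i)" unfolding cls_def by simp
    have "t - 1 \<noteq> 0" using C(1) Vt0 unfolding Vp_def by (metis empty_iff)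
    then have "spanning_forest (H d ps (t-1) i) (F (t-1) i)" using adm_facts[OF adm, of "t-1"] t by simp
    then have "conn (F (t-1) i) = conn (H d ps (t-1) i)" by (rule conn_span)
    then have "(C1,C2) \<in> conn (F (t-1) i)" using hc by simp
    then have "(Dof d ps t i C1, Dof d ps t i C2) \<in> conn Q" unfolding Q_def by (rule Dof_conn[OF vi adm t])
    then show "cls Q V (Dof d ps t i C1) = cls Q V (Dof d ps t i C2)" by (rule cls_eq)
  qed
  have e: "card (cls Q V ` Old d ps t i) \<le> comps (H d ps (t-1) i) Vp"
    using e1 e2 unfolding comps_def by simp
  show ?thesis using a b c d e unfolding V_def Vp_def by linarith
qed

lemma lvl_bound:
  assumes vi: "valid_instance d ps" and x: "x \<in> terms ps" and l: "int i \<le> lvl d ps x"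
  shows "\<exists>y. ((x,y) \<in> set ps \<or> (y,x) \<in> set ps) \<and> 2^i/2 \<le> d x y"
proof -
  obtain y where y: "(x,y) \<in> set ps \<or> (y,x) \<in> set ps" using partner[OF x] by blast
  have m: "mate ps x = y" by (rule mate_eq[OF vi_pdist[OF vi] y])
  have yt: "y \<in> terms ps" using y unfolding terms_def by force
  have "x \<noteq> y" using y pdist_pair[OF vi_pdist[OF vi]] by blast
  then have d1: "1 \<le> d x y" using vi_d1[OF vi x yt] by simp
  have "int i \<le> \<lceil>log 2 (d x y)\<rceil>" using l m unfolding lvl_def by simp
  then have "real i - 1 < log 2 (d x y)" by (simp add: le_ceiling_iff)
  then have "2 powr (real i - 1) < d x y" using d1 by (subst (asm) less_log_iff) auto
  moreover have "2 powr (real i - 1) = 2^i/2" by (simp add: powr_diff powr_realpow)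
  ultimately show ?thesis using y by (intro exI[of _ y]) simp
qed

lemma sep_new:
  assumes vi: "valid_instance d ps" and t: "1 \<le> t" "t < t'" "t' \<le> length ps"
    and x: "x \<in> {fst (ps!(t-1)), snd (ps!(t-1))}" and lx: "int i \<le> lvl d ps x"
    and D: "D \<in> New d ps t' i" "y \<in> D" and ly: "int i \<le> lvl d ps y"
  shows "2^i \<le> d x y"
proof (rule ccontr)
  assume "\<not> 2^i \<le> d x y"
  then have dxy: "d x y < 2^i" by simp
  have t1: "1 \<le> t'" using t by simp
  have DV: "D \<in> clus d (take t' ps) i" "D \<in> Vt d ps t' i" using D(1) unfolding New_def Vt_def by auto
  have xt0: "x \<in> terms (take t ps)" using x unfolding take_last[OF t(1) order.trans[OF less_imp_le[OF t(2)] t(3)]] terms_snoc by blast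
  have "t \<le> t'-1" using t by simp
  then have xtp: "x \<in> terms (take (t'-1) ps)" using xt0 by (rule subsetD[OF terms_take_mono])
  have xt: "x \<in> terms (take t' ps)" using xtp terms_take_mono[of "t'-1" t' ps] by auto
  have yt: "y \<in> terms (take t' ps)" using D(2) clus_sub[OF DV(1)] by blast
  have sub: "terms (take t' ps) \<subseteq> terms ps" by (rule terms_take_sub)
  have h1: "\<And>x y. x \<in> terms (take t' ps) \<Longrightarrow> y \<in> terms (take t' ps) \<Longrightarrow> x \<noteq> y \<Longrightarrow> 1 \<le> d x y"
    using vi_d1[OF vi] sub by blast
  have h2: "\<And>x y. x \<in> terms (take t' ps) \<Longrightarrow> y \<in> terms (take t' ps) \<Longrightarrow> 0 \<le> d x y"
    using vi_nn[OF vi] sub by blast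
  have l1: "int i \<le> lvl d (take t' ps) x" using lx lvl_take[OF vi_pdist[OF vi] xt] by simp
  have l2: "int i \<le> lvl d (take t' ps) y" using ly lvl_take[OF vi_pdist[OF vi] yt] by simp
  have "\<exists>C\<in>clus d (take t' ps) i. x \<in> C \<and> y \<in> C" by (rule sep_lemma[OF h1 h2 xt yt l1 l2 dxy])
  then obtain C where C: "C \<in> clus d (take t' ps) i" "x \<in> C" "y \<in> C" by (elim bexE conjE)
  have "C = D" using clus_disj[OF C(1) DV(1) C(3) D(2)] .
  then have "x \<in> D" using C(2) by simp
  then have "\<exists>C\<in>Vt d ps (t'-1) i. C \<subseteq> D" by (rule old_witness[OF vi t1 DV(1) _ xtp lx])
  then have "D \<in> Old d ps t' i" unfolding Old_def using DV(2) by simp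
  then show False using D(1) unfolding New_def by simp
qed

lemma main_bound:
  assumes vi: "valid_instance d ps" and adm: "admissible d ps Finh F"
  shows "(\<Sum>t = 1..length ps. real (card (F t i - Finh t i)) * 2 ^ (i + 1)) \<le> 16 * OPT d ps"
proof -
  define n where "n = length ps"
  define N where "N t = card (New d ps t i)" for t
  define Phi where "Phi t = comps (H d ps t i) (Vt d ps t i)" for t
  have tele: "(\<Sum>t = 1..m. card (F t i - Finh t i)) + Phi m \<le> (\<Sum>t = 1..m. N t)" if "m \<le> n" for m
    using that
  proof (induction m)
    case 0
    have "Phi 0 = 0" unfolding Phi_def comps_def using Vt0 by simp
    then show ?case by simp
  next
    case (Suc m)
    have st: "card (F (Suc m) i - Finh (Suc m) i) + Phi (Suc m) \<le> Phi m + N (Suc m)"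
      using step_ineq[OF vi adm, of "Suc m" i] Suc.prems unfolding Phi_def N_def n_def by simp
    have IH: "(\<Sum>t = 1..m. card (F t i - Finh t i)) + Phi m \<le> (\<Sum>t = 1..m. N t)"
      using Suc.IH Suc.prems by simp
    show ?case using st IH by simp
  qed
  have S1: "(\<Sum>t = 1..n. card (F t i - Finh t i)) \<le> (\<Sum>t = 1..n. N t)" using tele[of n] by simp
  define T where "T = {t\<in>{1..n}. New d ps t i \<noteq> {}}"
  have finT: "finite T" unfolding T_def by simp
  have S2: "(\<Sum>t = 1..n. N t) \<le> 2 * card T"
  proof -
    have "(\<Sum>t = 1..n. N t) \<le> (\<Sum>t = 1..n. if New d ps t i \<noteq> {} then 2 else 0)"
    proof (rule sum_mono)
      fix t assume "t \<in> {1..n}"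
      then have "N t \<le> 2" unfolding N_def using card_New[OF vi, of t i] n_def by simp
      then show "N t \<le> (if New d ps t i \<noteq> {} then 2 else 0)" unfolding N_def by auto
    qed
    also have "\<dots> = (\<Sum>t\<in>T. 2)" unfolding T_def by (rule sum.inter_filter[symmetric]) simp
    also have "\<dots> = 2 * card T" by simp
    finally show ?thesis .
  qed
  define U where "U t = {fst (ps!(t-1)), snd (ps!(t-1))}" for t
  define w where "w t = (SOME x. x \<in> U t \<and> int i \<le> lvl d ps x \<and> (\<exists>D\<in>New d ps t i. x \<in> D))" for t
  have wp: "w t \<in> U t \<and> int i \<le> lvl d ps (w t) \<and> (\<exists>D\<in>New d ps t i. w t \<in> D)" if tT: "t \<in> T" for t
  proof -
    have t: "1 \<le> t" "t \<le> length ps" "New d ps t i \<noteq> {}" using tT unfolding T_def n_def by auto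
    then obtain D where D: "D \<in> New d ps t i" by blast
    obtain x where "x \<in> D" "x \<in> U t" "int i \<le> lvl d ps x" using new_prop[OF vi t(1,2) D] unfolding U_def by blast
    then have "\<exists>x. x \<in> U t \<and> int i \<le> lvl d ps x \<and> (\<exists>D\<in>New d ps t i. x \<in> D)" using D by blast
    then show ?thesis unfolding w_def by (rule someI_ex)
  qed
  have wterms: "w t \<in> terms ps" if "t \<in> T" for t
  proof -
    have t: "1 \<le> t" "t \<le> length ps" using that unfolding T_def n_def by auto
    have "ps ! (t-1) \<in> set ps" using t by simp
    then show ?thesis using wp[OF that] unfolding U_def terms_def by force
  qed
  have sep1: "2^i \<le> d (w t) (w t')" if H1: "t \<in> T" "t' \<in> T" "t < t'" for t t'
  proof -
    have tt: "1 \<le> t" "t' \<le> length ps" using H1 unfolding T_def n_def by auto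
    obtain D where D: "D \<in> New d ps t' i" "w t' \<in> D" using wp[OF H1(2)] by blast
    show ?thesis
      by (rule sep_new[OF vi tt(1) H1(3) tt(2) _ _ D]) (use wp[OF H1(1)] wp[OF H1(2)] in \<open>auto simp: U_def\<close>)
  qed
  have dsym: "d x y = d y x" if "x \<in> terms ps" "y \<in> terms ps" for x y
    using vi that unfolding valid_instance_def by auto
  have d0: "d x x = 0" if "x \<in> terms ps" for x
    using vi that unfolding valid_instance_def by auto
  have sep2: "2^i \<le> d (w t) (w t')" if "t \<in> T" "t' \<in> T" "t \<noteq> t'" for t t'
  proof (cases "t < t'")
    case True then show ?thesis using sep1 that by blast
  next
    case False
    then have "t' < t" using that by simp
    then have "2^i \<le> d (w t') (w t)" using sep1 that by blast
    then show ?thesis using dsym wterms that by metis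
  qed
  have inj: "inj_on w T"
  proof (rule inj_onI)
    fix t t' assume a: "t \<in> T" "t' \<in> T" "w t = w t'"
    show "t = t'"
    proof (rule ccontr)
      assume "t \<noteq> t'"
      then have "2^i \<le> d (w t) (w t')" using sep2 a by blast
      moreover have "d (w t) (w t') = 0" using a d0 wterms by simp
      moreover have "(0::real) < 2^i" by simp
      ultimately show False by linarith
    qed
  qed
  define S where "S = w ` T"
  have cardS: "card S = card T" unfolding S_def using inj by (simp add: card_image)
  have OPTb: "real (card S) * (2^i/2) \<le> 2 * OPT d ps"
  proof (rule OPT_lower[OF vi])
    show "S \<subseteq> terms ps" unfolding S_def using wterms by blast
    show "(0::real) < 2^i/2" by simp
    fix x assume "x \<in> S"
    then obtain t where t: "t \<in> T" "x = w t" unfolding S_def by blast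
    show "\<exists>y. ((x, y) \<in> set ps \<or> (y, x) \<in> set ps) \<and> 2 ^ i / 2 \<le> d x y"
      using lvl_bound[OF vi wterms[OF t(1)]] wp[OF t(1)] t(2) by blast
  next
    fix x y assume "x \<in> S" "y \<in> S" "x \<noteq> y"
    then obtain t t' where "t \<in> T" "t' \<in> T" "x = w t" "y = w t'" "t \<noteq> t'" unfolding S_def by blast
    then show "2 * (2 ^ i / 2) \<le> d x y" using sep2 by simp
  qed
  have natle: "(\<Sum>t = 1..n. card (F t i - Finh t i)) \<le> 2 * card T" using S1 S2 by linarith
  have rle: "(\<Sum>t = 1..n. real (card (F t i - Finh t i))) \<le> real (2 * card T)"
  proof -
    have "(\<Sum>t = 1..n. real (card (F t i - Finh t i))) = real (\<Sum>t = 1..n. card (F t i - Finh t i))"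
      by (rule of_nat_sum[symmetric])
    also have "\<dots> \<le> real (2 * card T)" using natle by (simp only: of_nat_le_iff)
    finally show ?thesis .
  qed
  have "(\<Sum>t = 1..length ps. real (card (F t i - Finh t i)) * 2 ^ (i + 1))
      = (\<Sum>t = 1..n. real (card (F t i - Finh t i))) * 2 ^ (i + 1)"
    unfolding n_def by (rule sum_distrib_right[symmetric])
  also have "\<dots> \<le> real (2 * card T) * 2 ^ (i + 1)"
    using rle by (intro mult_right_mono) simp_all
  also have "\<dots> = 8 * (real (card S) * (2^i/2))" using cardS by simp
  also have "\<dots> \<le> 16 * OPT d ps" using OPTb by simp
  finally show ?thesis .
qed

theorem theorem4p7:
  "\<exists>c::real. \<forall>(ps :: (nat \<times> nat) list) (d :: nat \<Rightarrow> nat \<Rightarrow> real)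
      (Finh :: nat \<Rightarrow> nat \<Rightarrow> nat set set set) (F :: nat \<Rightarrow> nat \<Rightarrow> nat set set set) (i :: nat).
     valid_instance d ps \<and> admissible d ps Finh F \<longrightarrow>
     (\<Sum>t = 1..length ps. real (card (F t i - Finh t i)) * 2 ^ (i + 1)) \<le> c * OPT d ps"
  by (intro exI[of _ 16] allI impI) (elim conjE, rule main_bound)

end
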